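(* For every positive integer $n$: $$3\,\frac{n(n+1)}{2}\ \Big|\ \sum_{k=1}^n kD_kD_{k-1},\qquad \frac{n^2(n+1)^2}{4}\ \Big|\ \sum_{k=1}^n k^3D_kD_{k-1},$$ $$\frac{n(n+1)(n+2)}{(2,n)}\ \Big|\ \sum_{k=1}^n k(k+1)(2k+1)s_k^2,$$ and $$\frac{1}{n(n+1)(n+2)}\sum_{k=1}^n k(k+1)(2k+1)(-1)^{n-k}s_k^2=\frac{s_ns_{n+1}}{3}\in\mathbb{Z},$$ where $(2,n)$ is the greatest common divisor of $2$ and $n$.
   Context: $D_n=\sum_{k=0}^n\binom{n}{k}\binom{n+k}{k}$ is the central Delannoy number. For $m\ge k\ge1$, the Narayana number is $N(m,k)=\frac1m\binom{m}{k}\binom{m}{k-1}$, and for $m\ge1$ the little Schröder number is $s_m=\sum_{k=1}^m N(m,k)2^{m-k}$. *)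

theory Defs
  imports Complex_Main
begin

definition delannoy :: "nat \<Rightarrow> nat" where
  "delannoy n = (\<Sum>k=0..n. (n choose k) * ((n + k) choose k))"

definition narayana :: "nat \<Rightarrow> nat \<Rightarrow> rat" where
  "narayana m k = (1 / of_nat m) * of_nat (m choose k) * of_nat (m choose (k - 1))"

definition schroeder_s :: "nat \<Rightarrow> rat" where
  "schroeder_s m = (\<Sum>k=1..m. narayana m k * 2 ^ (m - k))"

end

theory Submission
  imports Defs
begin

lemma binp:
  fixes A :: rat
  assumes "A = of_nat a - of_nat k + 1"
  shows "of_nat (a choose k) = pochhammer A k / fact k"
  using assms by (simp add: binomial_gbinomial gbinomial_pochhammer')

lemma pL: "b = a + 1 \<Longrightarrow> pochhammer a (Suc k) = a * pochhammer b k"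
  by (simp add: pochhammer_rec)
lemma pR: "c = a + of_nat k \<Longrightarrow> pochhammer a (Suc k) = pochhammer a k * c"
  by (simp add: pochhammer_Suc)

definition aa :: "nat \<Rightarrow> nat \<Rightarrow> rat" where
  "aa n k = of_nat (n choose k) * of_nat (n + k choose k)"
definition ee :: "nat \<Rightarrow> nat \<Rightarrow> rat" where
  "ee n j = of_nat (n - 1 choose j) * of_nat (n + j choose j) * of_nat (2 * j choose j)"
definition ff :: "nat \<Rightarrow> nat \<Rightarrow> rat" where
  "ff n j = of_nat (n choose j) * of_nat (n + j choose j) * of_nat (2 * j choose j)"
definition cat :: "nat \<Rightarrow> rat" where
  "cat j = of_nat (2 * j choose j) / (of_nat j + 1)"
definition hh :: "nat \<Rightarrow> rat" where
  "hh j = cat (j + 1) / (of_nat j + 1)"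
definition gg :: "nat \<Rightarrow> nat \<Rightarrow> rat" where
  "gg n j = of_nat (n - 1 choose j) * of_nat (n + j + 1 choose j) * hh j"
definition pp :: "nat \<Rightarrow> nat \<Rightarrow> rat" where
  "pp n j = of_nat (n - 1 choose j) * of_nat (n + j + 2 choose j) * hh j"
definition nar :: "nat \<Rightarrow> nat \<Rightarrow> rat" where
  "nar m k = (if k = 0 then 0 else narayana m k)"

lemma cb2: "(of_nat (2 * Suc j choose Suc j) :: rat) * (of_nat j + 1) ^ 2
   = of_nat (2 * j choose j) * (2 * of_nat j + 1) * (2 * of_nat j + 2)"
proof -
  have 1: "Suc (2*j) * (2*j choose j) = (Suc (2*j) choose Suc j) * Suc j"
    by (rule Suc_times_binomial_eq)
  have 2: "Suc (Suc (2*j)) * (Suc (2*j) choose j) = (Suc (Suc (2*j)) choose Suc j) * Suc j"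
    by (rule Suc_times_binomial_eq)
  have 3: "(Suc (2*j) choose j) = (Suc (2*j) choose Suc j)"
    using binomial_symmetric[of j "Suc (2*j)"] by simp
  have "(2 * Suc j choose Suc j) * Suc j * Suc j = (Suc (Suc (2*j)) choose Suc j) * Suc j * Suc j"
    by simp
  also have "\<dots> = Suc (Suc (2*j)) * ((Suc (2*j) choose j) * Suc j)" using 2 by (metis mult.assoc mult.commute)
  also have "\<dots> = Suc (Suc (2*j)) * (Suc (2*j) * (2*j choose j))" by (simp only: 3 1[symmetric])
  finally have "(2 * Suc j choose Suc j) * Suc j * Suc j = Suc (Suc (2*j)) * Suc (2*j) * (2*j choose j)"
    by (simp only: mult.assoc)
  then have "(of_nat ((2 * Suc j choose Suc j) * Suc j * Suc j) :: rat) = of_nat (Suc (Suc (2*j)) * Suc (2*j) * (2*j choose j))"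
    by (simp only:)
  then show ?thesis by (simp add: power2_eq_square algebra_simps del: binomial_Suc_Suc)
qed

lemma T1:
  assumes "n \<ge> 1"
  shows "(of_nat n + 1) * aa (n + 1) (k + 1)
    = (2 * of_nat n + 1) * (2 * aa n k + aa n (k + 1)) - of_nat n * aa (n - 1) (k + 1)"
proof (cases k)
  case 0
  have "n - 1 + 1 = n" using assms by simp
  then show ?thesis unfolding aa_def 0 using assms
    by (simp add: of_nat_diff algebra_simps)
next
  case (Suc i)
  define x :: rat where "x = of_nat n"
  have xm: "of_nat (n - 1) = x - 1" "of_nat (n - Suc 0) = x - 1" using assms by (simp_all add: x_def of_nat_diff)
  have e1: "n - 1 + (k + 1) = n + k" using assms by simp
  define Q where "Q = pochhammer (x - of_nat i) i"
  define R where "R = pochhammer (x + 2) i"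
  have b1: "of_nat (n choose k) = Q * x / fact k"
    unfolding Suc Q_def
    by (subst binp[of "x - of_nat i"]) (auto simp: x_def pR[of x])
  have b2: "of_nat (n choose (k+1)) = (x - of_nat i - 1) * Q * x / fact (k+1)"
    unfolding Suc Q_def
    by (subst binp[of "x - of_nat i - 1"]) (auto simp: x_def pR[of x] pL[of "x - of_nat i"])
  have b3: "of_nat (n + 1 choose (k+1)) = Q * x * (x + 1) / fact (k+1)"
    unfolding Suc Q_def
    by (subst binp[of "x - of_nat i"]) (auto simp: x_def pR[of x] pR[of "x+1"])
  have b4: "of_nat (n - 1 choose (k+1)) = (x - of_nat i - 2) * (x - of_nat i - 1) * Q / fact (k+1)"
    unfolding Suc Q_def
    by (subst binp[of "x - of_nat i - 2"]) (auto simp: xm pL[of "x - of_nat i - 1"] pL[of "x - of_nat i"])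
  have b5: "of_nat (n + k choose k) = (x + 1) * R / fact k"
    unfolding Suc R_def
    by (subst binp[of "x + 1"]) (auto simp: x_def pL[of "x+2"])
  have b6: "of_nat (n + (k+1) choose (k+1)) = (x + 1) * R * (x + 2 + of_nat i) / fact (k+1)"
    unfolding Suc R_def
    by (subst binp[of "x + 1"]) (auto simp: x_def pL[of "x+2"] pR[of "x + 2 + of_nat i"])
  have b7: "of_nat (n + k choose (k+1)) = x * (x + 1) * R / fact (k+1)"
    unfolding Suc R_def
    by (subst binp[of "x"]) (auto simp: x_def pL[of "x+1"] pL[of "x+2"])
  have b8: "of_nat (n + 1 + (k+1) choose (k+1)) = R * (x + 2 + of_nat i) * (x + 3 + of_nat i) / fact (k+1)"
    unfolding Suc R_def
    by (subst binp[of "x + 2"]) (auto simp: x_def pR[of "x + 2 + of_nat i"] pR[of "x + 3 + of_nat i"])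
  define F :: rat where "F = fact (k+1)"
  have F0: "F \<noteq> 0" unfolding F_def by simp
  have fk: "fact k = F / (of_nat i + 2)" unfolding Suc F_def by (simp add: field_simps)
  have i2: "(of_nat i + 2 :: rat) \<noteq> 0" by (simp add: add_nonneg_pos)
  show ?thesis unfolding aa_def e1 b1 b2 b3 b4 b5 b6 b7 b8 x_def[symmetric] fk F_def[symmetric]
    using F0 i2 by (simp add: field_simps; simp add: algebra_simps)
qed


lemma T2:
  assumes "n \<ge> 1"
  shows "(of_nat n + 1) * ee (n + 1) j = (2 * of_nat n + 1) * ff n j - of_nat n * ee n j"
proof (cases j)
  case 0 then show ?thesis unfolding ee_def ff_def by (simp add: algebra_simps)
next
  case (Suc i)
  define x :: rat where "x = of_nat n"
  have xm: "of_nat (n - 1) = x - 1" "of_nat (n - Suc 0) = x - 1" using assms by (simp_all add: x_def of_nat_diff)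
  define Q where "Q = pochhammer (x - of_nat i) i"
  define R where "R = pochhammer (x + 2) i"
  have b1: "of_nat (n choose j) = Q * x / fact j"
    unfolding Suc Q_def
    by (subst binp[of "x - of_nat i"]) (auto simp: x_def pR[of x])
  have b2: "of_nat (n - 1 choose j) = (x - of_nat i - 1) * Q / fact j"
    unfolding Suc Q_def
    by (subst binp[of "x - of_nat i - 1"]) (auto simp: xm pL[of "x - of_nat i"])
  have b3: "of_nat (n + j choose j) = (x + 1) * R / fact j"
    unfolding Suc R_def
    by (subst binp[of "x + 1"]) (auto simp: x_def pL[of "x+2"])
  have b4: "of_nat (n + 1 + j choose j) = R * (x + 2 + of_nat i) / fact j"
    unfolding Suc R_def
    by (subst binp[of "x + 2"]) (auto simp: x_def pR[of "x + 2 + of_nat i"])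
  have nn: "n + 1 - 1 = n" by simp
  show ?thesis unfolding ee_def ff_def nn b1 b2 b3 b4 x_def[symmetric] by simp
      (simp add: field_simps; simp add: algebra_simps)
qed

lemma T3:
  assumes "n \<ge> 1"
  shows "(of_nat n + 1) ^ 2 * ff (n + 1) (j + 1)
     = (2 * of_nat n + 1) * (of_nat n + 1) * (4 * ee (n + 1) j + ee (n + 1) (j + 1))
       - of_nat n * (2 * of_nat n + 1) * (4 * ee n j + ee n (j + 1))
       + of_nat n ^ 2 * ff (n - 1) (j + 1)"
proof -
  define x :: rat where "x = of_nat n"
  have xm: "of_nat (n - 1) = x - 1" "of_nat (n - Suc 0) = x - 1" using assms by (simp_all add: x_def of_nat_diff)
  have e1: "n - 1 + (j + 1) = n + j" using assms by simp
  define Cc :: rat where "Cc = of_nat (2 * j choose j)"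
  have c2: "of_nat (2 * (j + 1) choose (j + 1)) = Cc * (2 * of_nat j + 1) * (2 * of_nat j + 2) / (of_nat j + 1) ^ 2"
    using cb2[of j] unfolding Cc_def by (simp add: field_simps)
  show ?thesis
  proof (cases j)
    case 0
    have "of_nat (n - 1) = x - 1" by (rule xm(1))
    then show ?thesis unfolding ee_def ff_def e1 0 using assms
      by (simp add: x_def[symmetric] xm algebra_simps power2_eq_square)
  next
    case (Suc i)
    define Q where "Q = pochhammer (x - of_nat i) i"
    define R where "R = pochhammer (x + 2) i"
    have b1: "of_nat (n choose j) = Q * x / fact j"
      unfolding Suc Q_def
      by (subst binp[of "x - of_nat i"]) (auto simp: x_def pR[of x])
    have b2: "of_nat (n - 1 choose j) = (x - of_nat i - 1) * Q / fact j"
      unfolding Suc Q_def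
      by (subst binp[of "x - of_nat i - 1"]) (auto simp: xm pL[of "x - of_nat i"])
    have b3: "of_nat (n choose (j+1)) = (x - of_nat i - 1) * Q * x / fact (j+1)"
      unfolding Suc Q_def
      by (subst binp[of "x - of_nat i - 1"]) (auto simp: x_def pR[of x] pL[of "x - of_nat i"])
    have b4: "of_nat (n - 1 choose (j+1)) = (x - of_nat i - 2) * (x - of_nat i - 1) * Q / fact (j+1)"
      unfolding Suc Q_def
      by (subst binp[of "x - of_nat i - 2"]) (auto simp: xm pL[of "x - of_nat i - 1"] pL[of "x - of_nat i"])
    have b5: "of_nat (n + 1 choose (j+1)) = Q * x * (x + 1) / fact (j+1)"
      unfolding Suc Q_def
      by (subst binp[of "x - of_nat i"]) (auto simp: x_def pR[of x] pR[of "x+1"])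
    have u1: "of_nat (n + 1 + j choose j) = R * (x + 2 + of_nat i) / fact j"
      unfolding Suc R_def
      by (subst binp[of "x + 2"]) (auto simp: x_def pR[of "x + 2 + of_nat i"])
    have u2: "of_nat (n + 1 + (j + 1) choose (j + 1)) = R * (x + 2 + of_nat i) * (x + 3 + of_nat i) / fact (j+1)"
      unfolding Suc R_def
      by (subst binp[of "x + 2"]) (auto simp: x_def pR[of "x + 2 + of_nat i"] pR[of "x + 3 + of_nat i"])
    have u3: "of_nat (n + j choose j) = (x + 1) * R / fact j"
      unfolding Suc R_def
      by (subst binp[of "x + 1"]) (auto simp: x_def pL[of "x+2"])
    have u4: "of_nat (n + (j + 1) choose (j + 1)) = (x + 1) * R * (x + 2 + of_nat i) / fact (j+1)"
      unfolding Suc R_def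
      by (subst binp[of "x + 1"]) (auto simp: x_def pL[of "x+2"] pR[of "x + 2 + of_nat i"])
    have u5: "of_nat (n + j choose (j + 1)) = x * (x + 1) * R / fact (j+1)"
      unfolding Suc R_def
      by (subst binp[of "x"]) (auto simp: x_def pL[of "x+1"] pL[of "x+2"])
    define F :: rat where "F = fact (j+1)"
    have F0: "F \<noteq> 0" unfolding F_def by simp
    have fk: "fact j = F / (of_nat i + 2)" unfolding Suc F_def by (simp add: field_simps)
    have i2: "(of_nat i + 2 :: rat) \<noteq> 0" "(of_nat j + 1 :: rat) \<noteq> 0" "(2 + of_nat i :: rat) \<noteq> 0" by (simp_all add: add_nonneg_pos)
    have jj: "(of_nat j :: rat) = of_nat i + 1" unfolding Suc by simp
    have nn: "n + 1 - 1 = n" by simp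
    show ?thesis unfolding ee_def ff_def nn e1 b1 b2 b3 b4 b5 u1 u2 u3 u4 u5 c2 Cc_def[symmetric]
        x_def[symmetric] fk F_def[symmetric] jj
      using F0 i2 unfolding jj by (simp add: divide_simps i2; simp add: algebra_simps power2_eq_square)
  qed
qed

lemma choose2: "(of_nat (m choose 2) :: rat) = of_nat m * (of_nat m - 1) / 2"
proof -
  have "(of_nat (m choose 2) :: rat) = pochhammer (of_nat m - 1) 2 / fact 2"
    by (rule binp) simp
  then show ?thesis by (simp add: pochhammer_Suc numeral_2_eq_2 algebra_simps)
qed


lemma solve_div: "(D::rat) \<noteq> 0 \<Longrightarrow> F = D * a \<Longrightarrow> a = F / D" by simp

lemma T4:
  assumes "n \<ge> 2"
  shows "(of_nat n + 2) * nar (n + 1) k = (2 * of_nat n + 1) * (nar n k + nar n (k - 1))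
     - (of_nat n - 1) * (nar (n - 1) k - 2 * nar (n - 1) (k - 1) + nar (n - 1) (k - 2))"
proof -
  define x :: rat where "x = of_nat n"
  have xs: "of_nat (n - 1) = x - 1" "of_nat (n - Suc 0) = x - 1" "of_nat (n + 1) = x + 1" "of_nat n = x"
    using assms by (simp_all add: x_def of_nat_diff)
  have x0: "x \<noteq> 0" "x - 1 \<noteq> 0" "x + 1 \<noteq> 0" "x + 2 \<noteq> 0" using assms by (simp_all add: x_def)
  have "k = 0 \<or> k = 1 \<or> k = 2 \<or> (\<exists>l. k = l + 3)" by presburger
  then consider "k = 0" | "k = 1" | "k = 2" | l where "k = l + 3" by blast
  then show ?thesis
  proof cases
    case 1 then show ?thesis by (simp add: nar_def)
  next
    case 2
    have "n - 1 \<noteq> 0" using assms by simp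
    then show ?thesis using 2 x0 by (simp add: nar_def narayana_def xs field_simps)
  next
    case 3
    have "n - 1 \<noteq> 0" using assms by simp
    then show ?thesis using 3 x0 by (simp add: nar_def narayana_def xs choose2 field_simps)
  next
    case 4
    define Q where "Q = pochhammer (x - of_nat l) l"
    have b0: "of_nat (n - 1 choose l) = Q / fact l"
      unfolding Q_def by (subst binp[of "x - of_nat l"]) (auto simp: xs)
    have b1: "of_nat (n - 1 choose (l+1)) = (x - of_nat l - 1) * Q / fact (l+1)"
      unfolding Q_def by (subst binp[of "x - of_nat l - 1"]) (auto simp: xs pL[of "x - of_nat l"])
    have b2: "of_nat (n - 1 choose (l+2)) = (x - of_nat l - 2) * (x - of_nat l - 1) * Q / fact (l+2)"
      unfolding Q_def by (subst binp[of "x - of_nat l - 2"])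
        (auto simp: xs pL[of "x - of_nat l"] pL[of "x - of_nat l - 1"] numeral_2_eq_2)
    have b3: "of_nat (n - 1 choose (l+3)) = (x - of_nat l - 3) * (x - of_nat l - 2) * (x - of_nat l - 1) * Q / fact (l+3)"
      unfolding Q_def by (subst binp[of "x - of_nat l - 3"])
        (auto simp: xs pL[of "x - of_nat l"] pL[of "x - of_nat l - 1"] pL[of "x - of_nat l - 2"] numeral_3_eq_3)
    have c1: "of_nat (n choose (l+1)) = Q * x / fact (l+1)"
      unfolding Q_def by (subst binp[of "x - of_nat l"]) (auto simp: xs pR[of x])
    have c2: "of_nat (n choose (l+2)) = (x - of_nat l - 1) * Q * x / fact (l+2)"
      unfolding Q_def by (subst binp[of "x - of_nat l - 1"])
        (auto simp: xs pR[of x] pL[of "x - of_nat l"] numeral_2_eq_2)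
    have c3: "of_nat (n choose (l+3)) = (x - of_nat l - 2) * (x - of_nat l - 1) * Q * x / fact (l+3)"
      unfolding Q_def by (subst binp[of "x - of_nat l - 2"])
        (auto simp: xs pR[of x] pL[of "x - of_nat l"] pL[of "x - of_nat l - 1"] numeral_3_eq_3)
    have d2: "of_nat (n + 1 choose (l+2)) = Q * x * (x + 1) / fact (l+2)"
      unfolding Q_def by (subst binp[of "x - of_nat l"])
        (auto simp: xs pR[of x] pR[of "x + 1"] numeral_2_eq_2)
    have d3: "of_nat (n + 1 choose (l+3)) = (x - of_nat l - 1) * Q * x * (x + 1) / fact (l+3)"
      unfolding Q_def by (subst binp[of "x - of_nat l - 1"])
        (auto simp: xs pR[of x] pR[of "x + 1"] pL[of "x - of_nat l"] numeral_3_eq_3)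
    define F :: rat where "F = fact (l+3)"
    have F0: "F \<noteq> 0" unfolding F_def by simp
    have l0: "(of_nat l + 3 :: rat) \<noteq> 0" "(of_nat l + 2 :: rat) \<noteq> 0" "(of_nat l + 1 :: rat) \<noteq> 0"
      by (simp_all add: add_nonneg_pos)
    have fs2: "F = (of_nat l + 3) * fact (l+2)" unfolding F_def by (simp add: numeral_3_eq_3 algebra_simps)
    have fs1: "F = ((of_nat l + 3) * (of_nat l + 2)) * fact (l+1)" unfolding F_def
      by (simp add: numeral_3_eq_3 numeral_2_eq_2 algebra_simps)
    have fs0: "F = ((of_nat l + 3) * (of_nat l + 2) * (of_nat l + 1)) * fact l" unfolding F_def
      by (simp add: numeral_3_eq_3 numeral_2_eq_2 algebra_simps)
    have f2: "fact (l+2) = F / (of_nat l + 3)" by (rule solve_div[OF _ fs2]) (use l0 in simp)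
    have f1: "fact (l+1) = F / ((of_nat l + 3) * (of_nat l + 2))" by (rule solve_div[OF _ fs1]) (use l0 in simp)
    have f0: "fact l = F / ((of_nat l + 3) * (of_nat l + 2) * (of_nat l + 1))" by (rule solve_div[OF _ fs0]) (use l0 in simp)
    have ks: "l + 3 - 1 = l + 2" "l + 3 - 2 = l + 1" "l + 2 - 1 = l + 1" "l + 1 - 1 = l"
      "(l + 3 = 0) = False" "(l + 2 = 0) = False" "(l + 1 = 0) = False" by simp_all
    show ?thesis unfolding 4 nar_def narayana_def ks if_False b0 b1 b2 b3 c1 c2 c3 d2 d3 xs
        f0 f1 f2 F_def[symmetric]
      using x0 l0 F0 by (simp add: divide_simps; simp add: algebra_simps)
  qed
qed


lemma hh_Suc: "hh (j + 1) = hh j * (2 * (2 * of_nat j + 3) * (of_nat j + 1)) / ((of_nat j + 2) * (of_nat j + 3))"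
proof -
  have c: "(of_nat (2 * Suc (Suc j) choose Suc (Suc j)) :: rat) * (of_nat j + 2) ^ 2
     = of_nat (2 * Suc j choose Suc j) * (2 * of_nat j + 3) * (2 * of_nat j + 4)"
    using cb2[of "Suc j"] by (simp add: algebra_simps)
  have n: "(of_nat j + 2 :: rat) \<noteq> 0" "(of_nat j + 3 :: rat) \<noteq> 0" "(of_nat j + 1 :: rat) \<noteq> 0"
     "(2 + of_nat j :: rat) \<noteq> 0" "(3 + of_nat j :: rat) \<noteq> 0" "(1 + of_nat j :: rat) \<noteq> 0"
    by (simp_all add: add_nonneg_pos add_pos_nonneg)
  have c': "(of_nat (2 * (j + 1 + 1) choose (j + 1 + 1)) :: rat)
     = of_nat (2 * (j + 1) choose (j + 1)) * (2 * of_nat j + 3) * (2 * of_nat j + 4) / (of_nat j + 2) ^ 2"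
    using c n by (simp add: field_simps)
  define B where "B = (of_nat (2 * (j + 1) choose (j + 1)) :: rat)"
  show ?thesis unfolding hh_def cat_def c' B_def[symmetric] using n
    by (simp add: divide_simps; simp add: algebra_simps power2_eq_square)
qed

lemma T5:
  assumes "n \<ge> 2"
  shows "(of_nat n + 2) * pp n j = (2 * of_nat n + 1) * gg n j - (of_nat n - 1) * pp (n - 1) j"
proof (cases j)
  case 0 then show ?thesis unfolding pp_def gg_def by (simp add: algebra_simps)
next
  case (Suc i)
  define x :: rat where "x = of_nat n"
  have xs: "of_nat (n - 1) = x - 1" "of_nat (n - Suc 0) = x - 1" "of_nat (n - 2) = x - 2"
    "of_nat (n - Suc (Suc 0)) = x - 2"
    using assms by (simp_all add: x_def of_nat_diff)
  have nn: "n - 1 - 1 = n - 2" "n - 1 + j + 2 = n + j + 1" using assms by simp_all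
  define Q where "Q = pochhammer (x - of_nat i - 1) i"
  define R where "R = pochhammer (x + 3) i"
  have b1: "of_nat (n - 1 choose j) = Q * (x - 1) / fact j"
    unfolding Suc Q_def by (subst binp[of "x - of_nat i - 1"]) (auto simp: xs pR[of "x - 1"])
  have b2: "of_nat (n - 2 choose j) = (x - of_nat i - 2) * Q / fact j"
    unfolding Suc Q_def by (subst binp[of "x - of_nat i - 2"]) (auto simp: xs pL[of "x - of_nat i - 1"])
  have u1: "of_nat (n + j + 2 choose j) = R * (x + 3 + of_nat i) / fact j"
    unfolding Suc R_def by (subst binp[of "x + 3"]) (auto simp: x_def pR[of "x + 3 + of_nat i"])
  have u2: "of_nat (n + j + 1 choose j) = (x + 2) * R / fact j"
    unfolding Suc R_def by (subst binp[of "x + 2"]) (auto simp: x_def pL[of "x + 3"])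
  show ?thesis unfolding pp_def gg_def nn b1 b2 u1 u2 x_def[symmetric]
    by (simp add: divide_simps; simp add: algebra_simps)
qed

lemma hh01: "hh 0 = 1" "hh 1 = 1" "hh (Suc 0) = 1"
  by (simp_all add: hh_def cat_def numeral_eq_Suc)

lemma T6:
  assumes "n \<ge> 2"
  shows "(of_nat n + 2) ^ 2 * gg (n + 1) (j + 1)
     = (2 * of_nat n + 1) * (of_nat n + 2) * (4 * pp n j + pp n (j + 1))
       - (of_nat n - 1) * (2 * of_nat n + 1) * (4 * pp (n - 1) j + pp (n - 1) (j + 1))
       + (of_nat n - 1) ^ 2 * gg (n - 1) (j + 1)"
proof -
  define x :: rat where "x = of_nat n"
  have xs: "of_nat (n - 1) = x - 1" "of_nat (n - Suc 0) = x - 1" "of_nat (n - 2) = x - 2"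
    "of_nat (n - Suc (Suc 0)) = x - 2"
    using assms by (simp_all add: x_def of_nat_diff)
  have nn: "n + 1 - 1 = n" "n + 1 + (j + 1) + 1 = n + j + 3" "n + (j + 1) + 2 = n + j + 3"
    "n - 1 - 1 = n - 2" "n - 1 + j + 2 = n + j + 1" "n - 1 + (j + 1) + 2 = n + j + 2"
    "n - 1 + (j + 1) + 1 = n + j + 1" using assms by simp_all
  define H where "H = hh j"
  have hs: "hh (j + 1) = H * (2 * (2 * of_nat j + 3) * (of_nat j + 1)) / ((of_nat j + 2) * (of_nat j + 3))"
    unfolding H_def by (rule hh_Suc)
  show ?thesis
  proof (cases j)
    case 0
    have "n - 2 + 1 = n - 1" using assms by simp
    then show ?thesis unfolding pp_def gg_def nn 0 using assms
      by (simp add: hh01 xs x_def[symmetric] algebra_simps power2_eq_square)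
  next
    case (Suc i)
    define Q where "Q = pochhammer (x - of_nat i - 1) i"
    define R where "R = pochhammer (x + 3) i"
    have b1: "of_nat (n - 1 choose j) = Q * (x - 1) / fact j"
      unfolding Suc Q_def by (subst binp[of "x - of_nat i - 1"]) (auto simp: xs pR[of "x - 1"])
    have b2: "of_nat (n choose (j+1)) = Q * (x - 1) * x / fact (j+1)"
      unfolding Suc Q_def by (subst binp[of "x - of_nat i - 1"]) (auto simp: x_def xs pR[of "x - 1"] pR[of x])
    have b3: "of_nat (n - 1 choose (j+1)) = (x - of_nat i - 2) * Q * (x - 1) / fact (j+1)"
      unfolding Suc Q_def by (subst binp[of "x - of_nat i - 2"]) (auto simp: xs pR[of "x - 1"] pL[of "x - of_nat i - 1"])
    have b4: "of_nat (n - 2 choose j) = (x - of_nat i - 2) * Q / fact j"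
      unfolding Suc Q_def by (subst binp[of "x - of_nat i - 2"]) (auto simp: xs pL[of "x - of_nat i - 1"])
    have b5: "of_nat (n - 2 choose (j+1)) = (x - of_nat i - 3) * (x - of_nat i - 2) * Q / fact (j+1)"
      unfolding Suc Q_def by (subst binp[of "x - of_nat i - 3"])
        (auto simp: xs pL[of "x - of_nat i - 1"] pL[of "x - of_nat i - 2"])
    have u1: "of_nat (n + j + 3 choose (j+1)) = R * (x + 3 + of_nat i) * (x + 4 + of_nat i) / fact (j+1)"
      unfolding Suc R_def by (subst binp[of "x + 3"]) (auto simp: x_def pR[of "x + 3 + of_nat i"] pR[of "x + 4 + of_nat i"])
    have u2: "of_nat (n + j + 2 choose j) = R * (x + 3 + of_nat i) / fact j"
      unfolding Suc R_def by (subst binp[of "x + 3"]) (auto simp: x_def pR[of "x + 3 + of_nat i"])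
    have u3: "of_nat (n + j + 1 choose j) = (x + 2) * R / fact j"
      unfolding Suc R_def by (subst binp[of "x + 2"]) (auto simp: x_def pL[of "x + 3"])
    have u4: "of_nat (n + j + 2 choose (j+1)) = (x + 2) * R * (x + 3 + of_nat i) / fact (j+1)"
      unfolding Suc R_def by (subst binp[of "x + 2"]) (auto simp: x_def pL[of "x + 3"] pR[of "x + 3 + of_nat i"])
    have u5: "of_nat (n + j + 1 choose (j+1)) = (x + 1) * (x + 2) * R / fact (j+1)"
      unfolding Suc R_def by (subst binp[of "x + 1"]) (auto simp: x_def pL[of "x + 2"] pL[of "x + 3"])
    define F :: rat where "F = fact (j+1)"
    have F0: "F \<noteq> 0" unfolding F_def by simp
    have fk: "fact j = F / (of_nat i + 2)" unfolding Suc F_def by (simp add: field_simps)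
    have jj: "(of_nat j :: rat) = of_nat i + 1" unfolding Suc by simp
    have i2: "(of_nat i + 2 :: rat) \<noteq> 0" "(of_nat i + 3 :: rat) \<noteq> 0" "(of_nat i + 4 :: rat) \<noteq> 0"
      "(2 + of_nat i :: rat) \<noteq> 0" "(3 + of_nat i :: rat) \<noteq> 0" "(4 + of_nat i :: rat) \<noteq> 0"
      by (simp_all add: add_nonneg_pos add_pos_nonneg)
    show ?thesis unfolding pp_def gg_def nn b1 b2 b3 b4 b5 u1 u2 u3 u4 u5 hs H_def[symmetric]
        x_def[symmetric] fk F_def[symmetric] jj
      using F0 i2 by (simp add: divide_simps i2; simp add: algebra_simps power2_eq_square)
  qed
qed


definition cl1 :: "nat \<Rightarrow> nat \<Rightarrow> rat" where
  "cl1 n j = of_nat n * (of_nat n + 1) / 2 * of_nat (n - 1 choose j) * of_nat (n + j + 1 choose j) * cat j"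
definition cl2 :: "nat \<Rightarrow> nat \<Rightarrow> rat" where
  "cl2 n j = of_nat n ^ 2 * (of_nat n + 1) ^ 2 / 2 * of_nat (n - 1 choose j) * of_nat (n + j + 1 choose j)
     * of_nat (2 * j choose j) / (of_nat j + 2)"
definition cl3 :: "nat \<Rightarrow> nat \<Rightarrow> rat" where
  "cl3 n j = (of_nat n + 1) * (of_nat n + 2) * cat (j + 1) * of_nat (n + 1 choose (j + 2)) * of_nat (n + j + 2 choose j)"

lemma T78:
  assumes "n \<ge> 1"
  shows "cl1 (n + 1) j - cl1 n j = (of_nat n + 1) * ee (n + 1) j"
    and "cl2 (n + 1) j - cl2 n j = (of_nat n + 1) ^ 3 * ee (n + 1) j"
proof -
  define x :: rat where "x = of_nat n"
  have xs: "of_nat (n - 1) = x - 1" "of_nat (n - Suc 0) = x - 1" "of_nat (n + 1) = x + 1" "of_nat n = x"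
    using assms by (simp_all add: x_def of_nat_diff)
  have nn: "n + 1 - 1 = n" "n + 1 + j + 1 = n + j + 2" "n + 1 + j = n + j + 1" "n + j + 1 + 1 = n + j + 2" by simp_all
  define Cc :: rat where "Cc = of_nat (2 * j choose j)"
  have j0: "(of_nat j + 1 :: rat) \<noteq> 0" "(of_nat j + 2 :: rat) \<noteq> 0" by (simp_all add: add_nonneg_pos)
  have "cl1 (n + 1) j - cl1 n j = (of_nat n + 1) * ee (n + 1) j
     \<and> cl2 (n + 1) j - cl2 n j = (of_nat n + 1) ^ 3 * ee (n + 1) j"
  proof (cases j)
    case 0 then show ?thesis unfolding cl1_def cl2_def ee_def cat_def nn xs
      by (simp add: algebra_simps power2_eq_square power3_eq_cube)
  next
    case (Suc i)
    define Q where "Q = pochhammer (x - of_nat i) i"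
    define R where "R = pochhammer (x + 3) i"
    have b1: "of_nat (n choose j) = Q * x / fact j"
      unfolding Suc Q_def by (subst binp[of "x - of_nat i"]) (auto simp: xs pR[of x])
    have b2: "of_nat (n - 1 choose j) = (x - of_nat i - 1) * Q / fact j"
      unfolding Suc Q_def by (subst binp[of "x - of_nat i - 1"]) (auto simp: xs pL[of "x - of_nat i"])
    have u1: "of_nat (n + j + 2 choose j) = R * (x + 3 + of_nat i) / fact j"
      unfolding Suc R_def by (subst binp[of "x + 3"]) (auto simp: x_def pR[of "x + 3 + of_nat i"])
    have u2: "of_nat (n + j + 1 choose j) = (x + 2) * R / fact j"
      unfolding Suc R_def by (subst binp[of "x + 2"]) (auto simp: x_def pL[of "x + 3"])
    have jj: "(of_nat j :: rat) = of_nat i + 1" unfolding Suc by simp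
    have i2: "(of_nat i + 2 :: rat) \<noteq> 0" "(of_nat i + 3 :: rat) \<noteq> 0"
      "(2 + of_nat i :: rat) \<noteq> 0" "(3 + of_nat i :: rat) \<noteq> 0"
      by (simp_all add: add_nonneg_pos add_pos_nonneg)
    show ?thesis unfolding cl1_def cl2_def ee_def cat_def nn xs b1 b2 u1 u2 Cc_def[symmetric] jj
      using i2 by (simp add: divide_simps; simp add: algebra_simps power2_eq_square power3_eq_cube)
  qed
  then show "cl1 (n + 1) j - cl1 n j = (of_nat n + 1) * ee (n + 1) j"
    and "cl2 (n + 1) j - cl2 n j = (of_nat n + 1) ^ 3 * ee (n + 1) j" by auto
qed

lemma T9:
  shows "cl3 (n + 1) j - cl3 n j = (of_nat n + 1) * (of_nat n + 2) * (2 * of_nat n + 3) * gg (n + 1) j"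
proof -
  define x :: rat where "x = of_nat n"
  have xs: "of_nat (n + 1) = x + 1" "of_nat n = x" by (simp_all add: x_def)
  have nn: "n + 1 - 1 = n" "n + 1 + 1 = n + 2" "n + 1 + j + 2 = n + j + 3" "n + 1 + j + 1 = n + j + 2" by simp_all
  define Cd :: rat where "Cd = cat (j + 1)"
  have j0: "(of_nat j + 1 :: rat) \<noteq> 0" "(of_nat j + 2 :: rat) \<noteq> 0" by (simp_all add: add_nonneg_pos)
  show ?thesis
  proof (cases j)
    case 0 then show ?thesis unfolding cl3_def gg_def hh_def Cd_def[symmetric] 0 nn add_0_left choose2
      by (simp add: xs field_simps; simp add: algebra_simps)
  next
    case (Suc i)
    define Q where "Q = pochhammer (x - of_nat i) i"
    define R where "R = pochhammer (x + 4) i"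
    have b1: "of_nat (n choose j) = Q * x / fact j"
      unfolding Suc Q_def by (subst binp[of "x - of_nat i"]) (auto simp: xs pR[of x])
    have b2: "of_nat (n + 1 choose (j+2)) = (x - of_nat i - 1) * Q * x * (x + 1) / fact (j+2)"
      unfolding Suc Q_def by (subst binp[of "x - of_nat i - 1"])
        (auto simp: xs pL[of "x - of_nat i"] pR[of x] pR[of "x + 1"] numeral_2_eq_2)
    have b3: "of_nat (n + 2 choose (j+2)) = Q * x * (x + 1) * (x + 2) / fact (j+2)"
      unfolding Suc Q_def by (subst binp[of "x - of_nat i"])
        (auto simp: xs pR[of x] pR[of "x + 1"] pR[of "x + 2"] numeral_2_eq_2)
    have u1: "of_nat (n + j + 2 choose j) = (x + 3) * R / fact j"
      unfolding Suc R_def by (subst binp[of "x + 3"]) (auto simp: x_def pL[of "x + 4"])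
    have u2: "of_nat (n + j + 3 choose j) = R * (x + 4 + of_nat i) / fact j"
      unfolding Suc R_def by (subst binp[of "x + 4"]) (auto simp: x_def pR[of "x + 4 + of_nat i"])
    define F :: rat where "F = fact (j+2)"
    have F0: "F \<noteq> 0" unfolding F_def by simp
    have i2: "(of_nat i + 2 :: rat) \<noteq> 0" "(of_nat i + 3 :: rat) \<noteq> 0"
      "(2 + of_nat i :: rat) \<noteq> 0" "(3 + of_nat i :: rat) \<noteq> 0"
      by (simp_all add: add_nonneg_pos add_pos_nonneg)
    have fs: "F = ((of_nat i + 3) * (of_nat i + 2)) * fact j" unfolding F_def Suc
      by (simp add: numeral_2_eq_2 algebra_simps)
    have fk: "fact j = F / ((of_nat i + 3) * (of_nat i + 2))" by (rule solve_div[OF _ fs]) (use i2 in simp)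
    have jj: "(of_nat j :: rat) = of_nat i + 1" unfolding Suc by simp
    show ?thesis unfolding cl3_def gg_def hh_def Cd_def[symmetric] nn xs b1 b2 b3 u1 u2 fk F_def[symmetric] jj
      using i2 F0 by (simp add: divide_simps i2; simp add: algebra_simps)
  qed
qed

lemma T9':
  assumes "n \<ge> 1"
  shows "(of_nat n + 1) * (of_nat n + 2) * of_nat (n + 1 choose (j + 2)) * of_nat (n + j + 2 choose j)
     = of_nat n * (of_nat n + 1) * of_nat (n - 1 choose j) * (of_nat (n + j + 2 choose (j + 2)) :: rat)"
proof -
  define x :: rat where "x = of_nat n"
  have xs: "of_nat (n - 1) = x - 1" "of_nat (n - Suc 0) = x - 1" "of_nat (n + 1) = x + 1" "of_nat n = x"
    using assms by (simp_all add: x_def of_nat_diff)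
  show ?thesis
  proof (cases j)
    case 0 then show ?thesis unfolding 0 add_0_left add_0_right choose2 by (simp add: xs field_simps; simp add: algebra_simps)
  next
    case (Suc i)
    define Q where "Q = pochhammer (x - of_nat i) i"
    define R where "R = pochhammer (x + 4) i"
    have b1: "of_nat (n - 1 choose j) = (x - of_nat i - 1) * Q / fact j"
      unfolding Suc Q_def by (subst binp[of "x - of_nat i - 1"]) (auto simp: xs pL[of "x - of_nat i"])
    have b2: "of_nat (n + 1 choose (j+2)) = (x - of_nat i - 1) * Q * x * (x + 1) / fact (j+2)"
      unfolding Suc Q_def by (subst binp[of "x - of_nat i - 1"])
        (auto simp: xs pL[of "x - of_nat i"] pR[of x] pR[of "x + 1"] numeral_2_eq_2)
    have u1: "of_nat (n + j + 2 choose j) = (x + 3) * R / fact j"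
      unfolding Suc R_def by (subst binp[of "x + 3"]) (auto simp: x_def pL[of "x + 4"])
    have u2: "of_nat (n + j + 2 choose (j + 2)) = (x + 1) * (x + 2) * (x + 3) * R / fact (j + 2)"
      unfolding Suc R_def by (subst binp[of "x + 1"])
        (auto simp: x_def pL[of "x + 2"] pL[of "x + 3"] pL[of "x + 4"] numeral_2_eq_2)
    show ?thesis unfolding b1 b2 u1 u2 xs by (simp add: divide_simps; simp add: algebra_simps)
  qed
qed

lemma T10:
  assumes "n \<ge> 1"
  shows "of_nat n * pp n j = of_nat (n choose (j + 1)) * of_nat (n + j + 2 choose j) * cat (j + 1)"
    and "(of_nat n + 2) * pp n j = of_nat (n - 1 choose j) * of_nat (n + j + 2 choose (j + 1)) * cat (j + 1)"
proof -
  define x :: rat where "x = of_nat n"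
  have xs: "of_nat (n - 1) = x - 1" "of_nat (n - Suc 0) = x - 1" "of_nat n = x"
    using assms by (simp_all add: x_def of_nat_diff)
  define P where "P = pochhammer (x - of_nat j) j"
  define R where "R = pochhammer (x + 3) j"
  have b1: "of_nat (n - 1 choose j) = P / fact j"
    unfolding P_def by (subst binp[of "x - of_nat j"]) (auto simp: xs)
  have b2: "of_nat (n choose (j + 1)) = P * x / fact (j + 1)"
    unfolding P_def by (subst binp[of "x - of_nat j"]) (auto simp: xs pR[of x])
  have u1: "of_nat (n + j + 2 choose j) = R / fact j"
    unfolding R_def by (subst binp[of "x + 3"]) (auto simp: x_def)
  have u2: "of_nat (n + j + 2 choose (j + 1)) = (x + 2) * R / fact (j + 1)"
    unfolding R_def by (subst binp[of "x + 2"]) (auto simp: x_def pL[of "x + 3"])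
  have j0: "(of_nat j + 1 :: rat) \<noteq> 0" "(1 + of_nat j :: rat) \<noteq> 0" by (simp_all add: add_nonneg_pos add_pos_nonneg)
  show "of_nat n * pp n j = of_nat (n choose (j + 1)) * of_nat (n + j + 2 choose j) * cat (j + 1)"
    unfolding pp_def hh_def b1 b2 u1 u2 xs using j0 by (simp add: divide_simps j0; simp add: algebra_simps)
  show "(of_nat n + 2) * pp n j = of_nat (n - 1 choose j) * of_nat (n + j + 2 choose (j + 1)) * cat (j + 1)"
    unfolding pp_def hh_def b1 b2 u1 u2 xs using j0 by (simp add: divide_simps j0; simp add: algebra_simps)
qed

lemma cat_int: "cat j = of_nat (2 * j choose j) - of_nat (2 * j choose (j + 1))"
proof -
  define P where "P = pochhammer (of_nat j + 1 :: rat) j"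
  have b1: "(of_nat (2 * j choose j) :: rat) = P / fact j"
    unfolding P_def by (subst binp[of "of_nat j + 1"]) auto
  have b2: "(of_nat (2 * j choose (j + 1)) :: rat) = of_nat j * P / fact (j + 1)"
    unfolding P_def by (subst binp[of "of_nat j"]) (auto simp: pL[of "of_nat j + 1"])
  have j0: "(of_nat j + 1 :: rat) \<noteq> 0" "(1 + of_nat j :: rat) \<noteq> 0" by (simp_all add: add_nonneg_pos add_pos_nonneg)
  show ?thesis unfolding cat_def b1 b2 using j0 by (simp add: divide_simps j0; simp add: algebra_simps)
qed

lemma six_const: "6 * of_nat (2 * j choose j) / (of_nat j + 2) = 4 * of_nat (2 * j choose j) - (of_nat j + 1) * cat (j + 1)"
proof -
  have c: "(of_nat (2 * (j + 1) choose (j + 1)) :: rat) = of_nat (2 * j choose j) * (2 * of_nat j + 1) * (2 * of_nat j + 2) / (of_nat j + 1) ^ 2"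
    using cb2[of j] by (simp add: field_simps)
  define B where "B = (of_nat (2 * j choose j) :: rat)"
  have j0: "(of_nat j + 1 :: rat) \<noteq> 0" "(1 + of_nat j :: rat) \<noteq> 0" "(of_nat j + 2 :: rat) \<noteq> 0" "(2 + of_nat j :: rat) \<noteq> 0"
    by (simp_all add: add_nonneg_pos add_pos_nonneg)
  show ?thesis unfolding cat_def c B_def[symmetric] using j0
    by (simp add: divide_simps j0; simp add: algebra_simps power2_eq_square)
qed


definition W :: "(nat \<Rightarrow> rat) \<Rightarrow> nat \<Rightarrow> rat" where
  "W u M = (\<Sum>j<M. u j * 2 ^ j)"

lemma W_shift: "(\<Sum>j<M. u (Suc j) * 2 ^ Suc j) = W u (Suc M) - u 0"
  unfolding W_def sum.lessThan_Suc_shift by simp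

lemma sum_ext0:
  fixes h :: "nat \<Rightarrow> rat"
  assumes "\<And>k. k \<ge> B \<Longrightarrow> h k = 0" "B \<le> M"
  shows "(\<Sum>k<M. h k) = (\<Sum>k<B. h k)"
  using assms(2)
proof (induction M rule: dec_induct)
  case base then show ?case by simp
next
  case (step m) then show ?case using assms(1)[of m] by simp
qed

lemma W_ext: "(\<And>j. j \<ge> B \<Longrightarrow> u j = 0) \<Longrightarrow> B \<le> M \<Longrightarrow> W u M = W u B"
  unfolding W_def by (rule sum_ext0) auto

lemma aa0: "aa m 0 = 1" by (simp add: aa_def)
lemma ee0: "ee m 0 = 1" by (simp add: ee_def)
lemma ff0: "ff m 0 = 1" by (simp add: ff_def)
lemma gg0: "gg m 0 = 1" by (simp add: gg_def hh01)
lemma pp0: "pp m 0 = 1" by (simp add: pp_def hh01)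

lemma ff_z: "j > n \<Longrightarrow> ff n j = 0" by (simp add: ff_def)
lemma ee_z: "n \<ge> 1 \<Longrightarrow> j \<ge> n \<Longrightarrow> ee n j = 0" by (simp add: ee_def)
lemma aa_z: "k > n \<Longrightarrow> aa n k = 0" by (simp add: aa_def)
lemma gg_z: "n \<ge> 1 \<Longrightarrow> j \<ge> n \<Longrightarrow> gg n j = 0"
proof -
  assume "n \<ge> 1" "j \<ge> n" then have "n - 1 < j" by arith then show ?thesis by (simp add: gg_def)
qed
lemma pp_z: "n \<ge> 1 \<Longrightarrow> j \<ge> n \<Longrightarrow> pp n j = 0"
proof -
  assume "n \<ge> 1" "j \<ge> n" then have "n - 1 < j" by arith then show ?thesis by (simp add: pp_def)
qed

lemma D_sum: "M > n \<Longrightarrow> (of_nat (delannoy n) :: rat) = (\<Sum>k<M. aa n k)"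
proof -
  assume M: "M > n"
  have "(of_nat (delannoy n) :: rat) = (\<Sum>k<Suc n. aa n k)"
    unfolding delannoy_def aa_def by (simp add: of_nat_sum atLeast0AtMost lessThan_Suc_atMost)
  also have "\<dots> = (\<Sum>k<M. aa n k)"
    by (rule sum_ext0[symmetric]) (use M aa_z in auto)
  finally show ?thesis .
qed

lemma D_rec:
  assumes "n \<ge> 1"
  shows "(of_nat n + 1) * (of_nat (delannoy (n + 1)) :: rat)
     = 3 * (2 * of_nat n + 1) * of_nat (delannoy n) - of_nat n * of_nat (delannoy (n - 1))"
proof -
  define M where "M = n + 3"
  define x :: rat where "x = of_nat n"
  have d1: "(of_nat (delannoy (n + 1)) :: rat) = (\<Sum>k<Suc M. aa (n + 1) k)" by (rule D_sum) (simp add: M_def)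
  have d0: "(of_nat (delannoy n) :: rat) = (\<Sum>k<M. aa n k)" by (rule D_sum) (simp add: M_def)
  have d0': "(of_nat (delannoy n) :: rat) = (\<Sum>k<Suc M. aa n k)" by (rule D_sum) (simp add: M_def)
  have dm: "(of_nat (delannoy (n - 1)) :: rat) = (\<Sum>k<Suc M. aa (n - 1) k)" by (rule D_sum) (simp add: M_def)
  have "(x + 1) * (\<Sum>k<Suc M. aa (n + 1) k) = (x + 1) + (\<Sum>k<M. (x + 1) * aa (n + 1) (k + 1))"
    by (subst sum.lessThan_Suc_shift) (simp add: aa0 sum_distrib_left algebra_simps)
  also have "(\<Sum>k<M. (x + 1) * aa (n + 1) (k + 1))
     = (\<Sum>k<M. (2 * x + 1) * 2 * aa n k + (2 * x + 1) * aa n (Suc k) - x * aa (n - 1) (Suc k))"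
    by (rule sum.cong) (use T1[OF assms] in \<open>auto simp: x_def algebra_simps\<close>)
  also have "\<dots> = (2 * x + 1) * 2 * (\<Sum>k<M. aa n k) + (2 * x + 1) * (\<Sum>k<M. aa n (Suc k))
       - x * (\<Sum>k<M. aa (n - 1) (Suc k))"
    by (simp add: sum.distrib sum_subtractf sum_distrib_left)
  also have "(\<Sum>k<M. aa n (Suc k)) = (\<Sum>k<Suc M. aa n k) - 1" by (subst sum.lessThan_Suc_shift) (simp add: aa0)
  also have "(\<Sum>k<M. aa (n - 1) (Suc k)) = (\<Sum>k<Suc M. aa (n - 1) k) - 1" by (subst sum.lessThan_Suc_shift) (simp add: aa0)
  finally show ?thesis unfolding d1 d0[symmetric] d0'[symmetric] dm[symmetric] x_def[symmetric]
    by (simp add: algebra_simps)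
qed

definition Fs :: "nat \<Rightarrow> rat" where "Fs n = W (ff n) (n + 1)"
definition Es :: "nat \<Rightarrow> rat" where "Es n = 3 * W (ee n) (n + 1)"

lemma Fs_any: "M \<ge> n + 1 \<Longrightarrow> W (ff n) M = Fs n"
  unfolding Fs_def by (rule W_ext) (auto simp: ff_z)
lemma Es_any: "n \<ge> 1 \<Longrightarrow> M \<ge> n + 1 \<Longrightarrow> 3 * W (ee n) M = Es n"
  unfolding Es_def using W_ext[of n "ee n" M] W_ext[of n "ee n" "n+1"] ee_z by auto

lemma SE1:
  assumes "n \<ge> 1"
  shows "(of_nat n + 1) * Es (n + 1) = 3 * (2 * of_nat n + 1) * Fs n - of_nat n * Es n"
proof -
  define M where "M = n + 3"
  have es: "Es (n + 1) = 3 * W (ee (n + 1)) M" using Es_any[of "n+1" M] by (simp add: M_def)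
  have "(of_nat n + 1) * Es (n + 1) = 3 * (\<Sum>j<M. (of_nat n + 1) * ee (n + 1) j * 2 ^ j)"
    unfolding es W_def sum_distrib_left by (simp add: mult_ac)
  also have "\<dots> = 3 * (\<Sum>j<M. (2 * of_nat n + 1) * (ff n j * 2 ^ j) - of_nat n * (ee n j * 2 ^ j))"
  proof -
    have t2: "(of_nat n + 1) * ee (n + 1) j * 2 ^ j = (2 * of_nat n + 1) * (ff n j * 2 ^ j) - of_nat n * (ee n j * 2 ^ j)" for j
      using arg_cong[OF T2[OF assms, of j], of "\<lambda>t. t * 2 ^ j"] by (simp add: algebra_simps)
    show ?thesis using t2 by simp
  qed
  also have "\<dots> = 3 * (2 * of_nat n + 1) * W (ff n) M - of_nat n * (3 * W (ee n) M)"
    by (simp add: W_def sum_subtractf sum_distrib_left algebra_simps)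
  finally show ?thesis using Fs_any[of n M] Es_any[of n M] assms by (simp add: M_def)
qed

lemma SE2:
  assumes "n \<ge> 1"
  shows "(of_nat n + 1) ^ 2 * Fs (n + 1) = 3 * (2 * of_nat n + 1) * (of_nat n + 1) * Es (n + 1)
     - 3 * of_nat n * (2 * of_nat n + 1) * Es n + of_nat n ^ 2 * Fs (n - 1)"
proof -
  define M where "M = n + 3"
  define x :: rat where "x = of_nat n"
  have "(x + 1) ^ 2 * Fs (n + 1) = (x + 1) ^ 2 * W (ff (n + 1)) (Suc M)"
    using Fs_any[of "n+1" "Suc M"] by (simp add: M_def)
  also have "\<dots> = (x + 1) ^ 2 + (\<Sum>j<M. (x + 1) ^ 2 * ff (n + 1) (Suc j) * 2 ^ Suc j)"
    unfolding W_def by (subst sum.lessThan_Suc_shift) (simp add: ff0 sum_distrib_left distrib_left mult_ac)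
  also have "(\<Sum>j<M. (x + 1) ^ 2 * ff (n + 1) (Suc j) * 2 ^ Suc j)
     = (\<Sum>j<M. (2 * x + 1) * (x + 1) * 8 * (ee (n + 1) j * 2 ^ j)
            + (2 * x + 1) * (x + 1) * (ee (n + 1) (Suc j) * 2 ^ Suc j)
            - x * (2 * x + 1) * 8 * (ee n j * 2 ^ j)
            - x * (2 * x + 1) * (ee n (Suc j) * 2 ^ Suc j)
            + x ^ 2 * (ff (n - 1) (Suc j) * 2 ^ Suc j))"
  proof -
    have t3: "(x + 1) ^ 2 * ff (n + 1) (Suc j) * 2 ^ Suc j = (2 * x + 1) * (x + 1) * 8 * (ee (n + 1) j * 2 ^ j)
            + (2 * x + 1) * (x + 1) * (ee (n + 1) (Suc j) * 2 ^ Suc j)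
            - x * (2 * x + 1) * 8 * (ee n j * 2 ^ j)
            - x * (2 * x + 1) * (ee n (Suc j) * 2 ^ Suc j)
            + x ^ 2 * (ff (n - 1) (Suc j) * 2 ^ Suc j)" for j
      using arg_cong[OF T3[OF assms, of j], of "\<lambda>t. t * 2 ^ Suc j"] unfolding x_def[symmetric]
      by (simp add: algebra_simps)
    show ?thesis using t3 by simp
  qed
  also have "\<dots> = (2 * x + 1) * (x + 1) * 8 * W (ee (n + 1)) M
            + (2 * x + 1) * (x + 1) * (\<Sum>j<M. ee (n + 1) (Suc j) * 2 ^ Suc j)
            - x * (2 * x + 1) * 8 * W (ee n) M
            - x * (2 * x + 1) * (\<Sum>j<M. ee n (Suc j) * 2 ^ Suc j)
            + x ^ 2 * (\<Sum>j<M. ff (n - 1) (Suc j) * 2 ^ Suc j)"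
    unfolding W_def by (simp add: sum.distrib sum_subtractf sum_distrib_left)
  also have "\<dots> = (2 * x + 1) * (x + 1) * 8 * W (ee (n + 1)) M
            + (2 * x + 1) * (x + 1) * (W (ee (n + 1)) (Suc M) - 1)
            - x * (2 * x + 1) * 8 * W (ee n) M
            - x * (2 * x + 1) * (W (ee n) (Suc M) - 1)
            + x ^ 2 * (W (ff (n - 1)) (Suc M) - 1)"
    by (simp only: W_shift ee0 ff0)
  finally have *: "(x + 1) ^ 2 * Fs (n + 1) = (x + 1) ^ 2 + ((2 * x + 1) * (x + 1) * 8 * W (ee (n + 1)) M
            + (2 * x + 1) * (x + 1) * (W (ee (n + 1)) (Suc M) - 1)
            - x * (2 * x + 1) * 8 * W (ee n) M
            - x * (2 * x + 1) * (W (ee n) (Suc M) - 1)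
            + x ^ 2 * (W (ff (n - 1)) (Suc M) - 1))" .
  have a1: "W (ee (n + 1)) M = Es (n + 1) / 3" "W (ee (n + 1)) (Suc M) = Es (n + 1) / 3"
    "W (ee n) M = Es n / 3" "W (ee n) (Suc M) = Es n / 3" "W (ff (n - 1)) (Suc M) = Fs (n - 1)"
    using Es_any[of "n+1" M] Es_any[of "n+1" "Suc M"] Es_any[of n M] Es_any[of n "Suc M"] Fs_any[of "n - 1" "Suc M"]
      assms by (auto simp: M_def)
  show ?thesis using * unfolding a1 x_def[symmetric] by (simp add: algebra_simps power2_eq_square)
qed

lemma delannoy01: "delannoy 0 = 1" "delannoy 1 = 3" "delannoy (Suc 0) = 3"
  by (simp_all add: delannoy_def)

lemma Dprod_all:
  "(of_nat (delannoy n) :: rat) ^ 2 = Fs n \<and> (n \<ge> 1 \<longrightarrow> of_nat (delannoy n) * of_nat (delannoy (n - 1)) = Es n)"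
proof -
  let ?P = "\<lambda>n. (of_nat (delannoy n) :: rat) ^ 2 = Fs n \<and> (n \<ge> 1 \<longrightarrow> of_nat (delannoy n) * of_nat (delannoy (n - 1)) = Es n)"
  have "?P n \<and> ?P (Suc n)"
  proof (induction n)
    case 0
    have "Fs 0 = 1" by (simp add: Fs_def W_def ff_def)
    moreover have "Fs 1 = 9" by (simp add: Fs_def W_def ff_def numeral_eq_Suc)
    moreover have "Es 1 = 3" by (simp add: Es_def W_def ee_def numeral_eq_Suc)
    ultimately show ?case by (simp add: delannoy01)
  next
    case (Suc n)
    define m where "m = Suc n"
    have m1: "m \<ge> 1" by (simp add: m_def)
    define d1 :: rat where "d1 = of_nat (delannoy (m + 1))"
    define d0 :: rat where "d0 = of_nat (delannoy m)"
    define dm :: rat where "dm = of_nat (delannoy (m - 1))"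
    define x :: rat where "x = of_nat m"
    have x0: "x + 1 \<noteq> 0" by (simp add: x_def add_nonneg_pos)
    have IH1: "dm ^ 2 = Fs (m - 1)" using Suc.IH by (simp add: m_def dm_def)
    have IH2: "d0 ^ 2 = Fs m" "d0 * dm = Es m" using Suc.IH by (simp_all add: m_def d0_def dm_def)
    have rec: "(x + 1) * d1 = 3 * (2 * x + 1) * d0 - x * dm"
      using D_rec[OF m1] by (simp add: x_def d1_def d0_def dm_def)
    have e1: "(x + 1) * Es (m + 1) = 3 * (2 * x + 1) * Fs m - x * Es m"
      using SE1[OF m1] by (simp add: x_def)
    have f1: "(x + 1) ^ 2 * Fs (m + 1) = 3 * (2 * x + 1) * (x + 1) * Es (m + 1)
       - 3 * x * (2 * x + 1) * Es m + x ^ 2 * Fs (m - 1)"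
      using SE2[OF m1] by (simp add: x_def)
    have E: "Es (m + 1) = d1 * d0"
    proof -
      have "(x + 1) * Es (m + 1) = (3 * (2 * x + 1) * d0 - x * dm) * d0"
        unfolding e1 IH2[symmetric] by (simp add: algebra_simps power2_eq_square)
      also have "\<dots> = (x + 1) * (d1 * d0)" unfolding rec[symmetric] by (simp add: algebra_simps)
      finally show ?thesis using x0 by simp
    qed
    have F: "Fs (m + 1) = d1 ^ 2"
    proof -
      have "((x + 1) * d1) ^ 2 = ((x + 1) * d1) * (3 * (2 * x + 1) * d0 - x * dm)"
        using rec by (simp add: power2_eq_square)
      also have "\<dots> = 3 * (2 * x + 1) * (x + 1) * (d1 * d0) - x * dm * ((x + 1) * d1)"
        by (simp add: algebra_simps)
      also have "\<dots> = 3 * (2 * x + 1) * (x + 1) * (d1 * d0) - x * dm * (3 * (2 * x + 1) * d0 - x * dm)"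
        using rec by simp
      also have "\<dots> = (x + 1) ^ 2 * Fs (m + 1)"
        unfolding f1 E IH1[symmetric] IH2[symmetric] by (simp add: algebra_simps power2_eq_square)
      finally have "(x + 1) ^ 2 * d1 ^ 2 = (x + 1) ^ 2 * Fs (m + 1)" by (simp only: power_mult_distrib)
      then show ?thesis using x0 by (metis mult_left_cancel power_not_zero)
    qed
    show ?case using Suc.IH E F by (simp add: m_def d1_def d0_def)
  qed
  then show ?thesis by blast
qed


lemma nar_z: "k > m \<Longrightarrow> nar m k = 0" by (simp add: nar_def narayana_def)
lemma nar0: "nar m 0 = 0" by (simp add: nar_def)

lemma s_sum:
  assumes "L > m"
  shows "schroeder_s m = 2 ^ m * (\<Sum>k<L. nar m k * (1/2) ^ k)"
proof -
  have 1: "schroeder_s m = (\<Sum>k=Suc 0..m. 2 ^ m * (nar m k * (1/2) ^ k))"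
    unfolding schroeder_s_def
    by (rule sum.cong) (auto simp: nar_def power_diff power_one_over)
  also have "\<dots> = (\<Sum>k<Suc m. 2 ^ m * (nar m k * (1/2) ^ k))"
    by (subst sum.lessThan_Suc_shift) (simp add: sum.atLeast1_atMost_eq nar0)
  also have "\<dots> = (\<Sum>k<L. 2 ^ m * (nar m k * (1/2) ^ k))"
    by (rule sum_ext0[symmetric]) (use assms nar_z in auto)
  finally show ?thesis by (simp add: sum_distrib_left)
qed

lemma shift1:
  fixes u :: "nat \<Rightarrow> rat"
  assumes "u 0 = 0"
  shows "(\<Sum>k<Suc L. u (k - 1) * c ^ k) = c * (\<Sum>k<L. u k * c ^ k)"
  by (subst sum.lessThan_Suc_shift) (simp add: assms sum_distrib_left mult_ac)

lemma shift2:
  fixes u :: "nat \<Rightarrow> rat"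
  assumes "u 0 = 0"
  shows "(\<Sum>k<Suc (Suc L). u (k - 2) * c ^ k) = c * c * (\<Sum>k<L. u k * c ^ k)"
proof -
  have "(\<Sum>k<Suc (Suc L). u (k - 2) * c ^ k) = (\<Sum>k<Suc (Suc L). (\<lambda>k. u (k - 1)) (k - 1) * c ^ k)"
    by (rule sum.cong) (auto simp: numeral_2_eq_2)
  also have "\<dots> = c * (\<Sum>k<Suc L. u (k - 1) * c ^ k)" by (rule shift1) (simp add: assms)
  also have "\<dots> = c * (c * (\<Sum>k<L. u k * c ^ k))" by (simp only: shift1[of u, OF assms])
  finally show ?thesis by simp
qed

lemma S_rec:
  assumes "n \<ge> 2"
  shows "(of_nat n + 2) * schroeder_s (n + 1) = 3 * (2 * of_nat n + 1) * schroeder_s n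
     - (of_nat n - 1) * schroeder_s (n - 1)"
proof -
  define K where "K = n + 2"
  define x :: rat where "x = of_nat n"
  define z :: rat where "z = 1/2"
  define q :: rat where "q = z ^ (n - 1)"
  have q0: "q \<noteq> 0" by (simp add: q_def z_def)
  have nS: "Suc (n - 1) = n" using assms by simp
  have "z ^ Suc (n - 1) = z * q" by (simp add: q_def)
  then have zn1: "z ^ n = z * q" unfolding nS .
  have zn: "z ^ n = z * q" "z ^ (n + 1) = z * z * q" using zn1 by simp_all
  have inv: "(2::rat) ^ m * z ^ m = 1" for m by (simp add: z_def power_mult_distrib[symmetric])
  define L where "L = Suc (Suc K)"
  define K1 where "K1 = Suc K"
  define S1 where "S1 = (\<Sum>k<L. nar (n + 1) k * z ^ k)"
  define S2 where "S2 = (\<Sum>k<L. nar n k * z ^ k)"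
  define S3 where "S3 = (\<Sum>k<K1. nar n k * z ^ k)"
  define S4 where "S4 = (\<Sum>k<L. nar (n - 1) k * z ^ k)"
  define S5 where "S5 = (\<Sum>k<K1. nar (n - 1) k * z ^ k)"
  define S6 where "S6 = (\<Sum>k<K. nar (n - 1) k * z ^ k)"
  have "schroeder_s (n + 1) = 2 ^ (n + 1) * S1" unfolding S1_def z_def by (rule s_sum) (simp add: L_def K_def)
  then have e1: "S1 = schroeder_s (n + 1) * (z * z * q)" unfolding zn(2)[symmetric] using inv[of "n+1"] by (simp add: algebra_simps)
  have "schroeder_s n = 2 ^ n * S2" unfolding S2_def z_def by (rule s_sum) (simp add: L_def K_def)
  then have e2: "S2 = schroeder_s n * (z * q)" unfolding zn(1)[symmetric] using inv[of n] by (simp add: algebra_simps)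
  have "schroeder_s n = 2 ^ n * S3" unfolding S3_def z_def by (rule s_sum) (simp add: K1_def K_def)
  then have e3: "S3 = schroeder_s n * (z * q)" unfolding zn(1)[symmetric] using inv[of n] by (simp add: algebra_simps)
  have "schroeder_s (n - 1) = 2 ^ (n - 1) * S4" unfolding S4_def z_def by (rule s_sum) (simp add: L_def K_def)
  then have e4: "S4 = schroeder_s (n - 1) * q" unfolding q_def using inv[of "n - 1"] by (simp add: algebra_simps)
  have "schroeder_s (n - 1) = 2 ^ (n - 1) * S5" unfolding S5_def z_def by (rule s_sum) (simp add: K1_def K_def)
  then have e5: "S5 = schroeder_s (n - 1) * q" unfolding q_def using inv[of "n - 1"] by (simp add: algebra_simps)
  have "schroeder_s (n - 1) = 2 ^ (n - 1) * S6" unfolding S6_def z_def by (rule s_sum) (use assms in \<open>simp add: K_def\<close>)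
  then have e6: "S6 = schroeder_s (n - 1) * q" unfolding q_def using inv[of "n - 1"] by (simp add: algebra_simps)
  have t4: "(x + 2) * nar (n + 1) k * z ^ k = (2 * x + 1) * (nar n k * z ^ k) + (2 * x + 1) * (nar n (k - 1) * z ^ k)
     - (x - 1) * (nar (n - 1) k * z ^ k) + 2 * (x - 1) * (nar (n - 1) (k - 1) * z ^ k)
     - (x - 1) * (nar (n - 1) (k - 2) * z ^ k)" for k
    using arg_cong[OF T4[OF assms, of k], of "\<lambda>t. t * z ^ k"] unfolding x_def[symmetric]
    by (simp add: algebra_simps)
  have "(x + 2) * S1 = (\<Sum>k<L. (x + 2) * nar (n + 1) k * z ^ k)"
    unfolding S1_def by (simp add: sum_distrib_left mult_ac)
  also have "\<dots> = (2 * x + 1) * S2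
      + (2 * x + 1) * (\<Sum>k<L. nar n (k - 1) * z ^ k)
      - (x - 1) * S4
      + 2 * (x - 1) * (\<Sum>k<L. nar (n - 1) (k - 1) * z ^ k)
      - (x - 1) * (\<Sum>k<L. nar (n - 1) (k - 2) * z ^ k)"
    unfolding t4 S2_def S4_def by (simp add: sum.distrib sum_subtractf sum_distrib_left)
  also have "(\<Sum>k<L. nar n (k - 1) * z ^ k) = z * S3"
    unfolding L_def S3_def K1_def by (rule shift1) (simp add: nar0)
  also have "(\<Sum>k<L. nar (n - 1) (k - 1) * z ^ k) = z * S5"
    unfolding L_def S5_def K1_def by (rule shift1) (simp add: nar0)
  also have "(\<Sum>k<L. nar (n - 1) (k - 2) * z ^ k) = z * z * S6"
    unfolding L_def S6_def by (rule shift2) (simp add: nar0)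
  finally have H: "(x + 2) * (schroeder_s (n + 1) * (z * z * q)) = (2 * x + 1) * (schroeder_s n * (z * q))
      + (2 * x + 1) * (z * (schroeder_s n * (z * q)))
      - (x - 1) * (schroeder_s (n - 1) * q)
      + 2 * (x - 1) * (z * (schroeder_s (n - 1) * q))
      - (x - 1) * (z * z * (schroeder_s (n - 1) * q))"
    unfolding e1 e2 e3 e4 e5 e6 .
  have "q * ((x + 2) * schroeder_s (n + 1)) = q * (3 * (2 * x + 1) * schroeder_s n - (x - 1) * schroeder_s (n - 1))"
    using H unfolding z_def by (simp add: field_simps; simp add: algebra_simps)
  then show ?thesis unfolding x_def[symmetric] using q0 by simp
qed

lemma s123: "schroeder_s 1 = 1" "schroeder_s 2 = 3" "schroeder_s 3 = 11"
proof -
  show s1: "schroeder_s 1 = 1" by (simp add: schroeder_s_def narayana_def)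
  show s2: "schroeder_s 2 = 3" by (simp add: schroeder_s_def narayana_def numeral_eq_Suc)
  have "(of_nat 2 + 2) * schroeder_s (2 + 1) = 3 * (2 * of_nat 2 + 1) * schroeder_s 2 - (of_nat 2 - 1) * schroeder_s (2 - 1)"
    by (rule S_rec) simp
  then show "schroeder_s 3 = 11" using s1 s2 by simp
qed


definition Gs :: "nat \<Rightarrow> rat" where "Gs n = W (gg n) (n + 1)"
definition Ps :: "nat \<Rightarrow> rat" where "Ps n = 3 * W (pp n) (n + 1)"

lemma Gs_any: "n \<ge> 1 \<Longrightarrow> M \<ge> n + 1 \<Longrightarrow> W (gg n) M = Gs n"
  unfolding Gs_def using W_ext[of n "gg n" M] W_ext[of n "gg n" "n+1"] gg_z by auto
lemma Ps_any: "n \<ge> 1 \<Longrightarrow> M \<ge> n + 1 \<Longrightarrow> 3 * W (pp n) M = Ps n"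
  unfolding Ps_def using W_ext[of n "pp n" M] W_ext[of n "pp n" "n+1"] pp_z by auto

lemma SG1:
  assumes "n \<ge> 2"
  shows "(of_nat n + 2) * Ps n = 3 * (2 * of_nat n + 1) * Gs n - (of_nat n - 1) * Ps (n - 1)"
proof -
  define M where "M = n + 3"
  have ps: "Ps n = 3 * W (pp n) M" using Ps_any[of n M] assms by (simp add: M_def)
  have "(of_nat n + 2) * Ps n = 3 * (\<Sum>j<M. (of_nat n + 2) * pp n j * 2 ^ j)"
    unfolding ps W_def sum_distrib_left by (simp add: mult_ac)
  also have "\<dots> = 3 * (\<Sum>j<M. (2 * of_nat n + 1) * (gg n j * 2 ^ j) - (of_nat n - 1) * (pp (n - 1) j * 2 ^ j))"
  proof -
    have t5: "(of_nat n + 2) * pp n j * 2 ^ j = (2 * of_nat n + 1) * (gg n j * 2 ^ j) - (of_nat n - 1) * (pp (n - 1) j * 2 ^ j)" for j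
      using arg_cong[OF T5[OF assms, of j], of "\<lambda>t. t * 2 ^ j"] by (simp add: algebra_simps)
    show ?thesis using t5 by simp
  qed
  also have "\<dots> = 3 * ((2 * of_nat n + 1) * W (gg n) M - (of_nat n - 1) * W (pp (n - 1)) M)"
    unfolding W_def by (simp only: sum_subtractf sum_distrib_left)
  also have "\<dots> = 3 * (2 * of_nat n + 1) * W (gg n) M - (of_nat n - 1) * (3 * W (pp (n - 1)) M)"
    by (simp add: algebra_simps)
  moreover have w1: "W (gg n) M = Gs n" by (rule Gs_any) (use assms in \<open>simp_all add: M_def\<close>)
  moreover have w2: "3 * W (pp (n - 1)) M = Ps (n - 1)" by (rule Ps_any) (use assms in \<open>simp_all add: M_def\<close>)
  ultimately show ?thesis by (simp add: algebra_simps)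
qed

lemma SG2:
  assumes "n \<ge> 2"
  shows "(of_nat n + 2) ^ 2 * Gs (n + 1) = 3 * (2 * of_nat n + 1) * (of_nat n + 2) * Ps n
     - 3 * (of_nat n - 1) * (2 * of_nat n + 1) * Ps (n - 1) + (of_nat n - 1) ^ 2 * Gs (n - 1)"
proof -
  define M where "M = n + 3"
  define x :: rat where "x = of_nat n"
  have "(x + 2) ^ 2 * Gs (n + 1) = (x + 2) ^ 2 * W (gg (n + 1)) (Suc M)"
    using Gs_any[of "n+1" "Suc M"] by (simp add: M_def)
  also have "\<dots> = (x + 2) ^ 2 + (\<Sum>j<M. (x + 2) ^ 2 * gg (n + 1) (Suc j) * 2 ^ Suc j)"
    unfolding W_def by (subst sum.lessThan_Suc_shift) (simp add: gg0 sum_distrib_left distrib_left mult_ac)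
  also have "(\<Sum>j<M. (x + 2) ^ 2 * gg (n + 1) (Suc j) * 2 ^ Suc j)
     = (\<Sum>j<M. (2 * x + 1) * (x + 2) * 8 * (pp n j * 2 ^ j)
            + (2 * x + 1) * (x + 2) * (pp n (Suc j) * 2 ^ Suc j)
            - (x - 1) * (2 * x + 1) * 8 * (pp (n - 1) j * 2 ^ j)
            - (x - 1) * (2 * x + 1) * (pp (n - 1) (Suc j) * 2 ^ Suc j)
            + (x - 1) ^ 2 * (gg (n - 1) (Suc j) * 2 ^ Suc j))"
  proof -
    have t6: "(x + 2) ^ 2 * gg (n + 1) (Suc j) * 2 ^ Suc j = (2 * x + 1) * (x + 2) * 8 * (pp n j * 2 ^ j)
            + (2 * x + 1) * (x + 2) * (pp n (Suc j) * 2 ^ Suc j)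
            - (x - 1) * (2 * x + 1) * 8 * (pp (n - 1) j * 2 ^ j)
            - (x - 1) * (2 * x + 1) * (pp (n - 1) (Suc j) * 2 ^ Suc j)
            + (x - 1) ^ 2 * (gg (n - 1) (Suc j) * 2 ^ Suc j)" for j
      using arg_cong[OF T6[OF assms, of j], of "\<lambda>t. t * 2 ^ Suc j"] unfolding x_def[symmetric]
      by (simp add: algebra_simps)
    show ?thesis using t6 by simp
  qed
  also have "\<dots> = (2 * x + 1) * (x + 2) * 8 * W (pp n) M
            + (2 * x + 1) * (x + 2) * (\<Sum>j<M. pp n (Suc j) * 2 ^ Suc j)
            - (x - 1) * (2 * x + 1) * 8 * W (pp (n - 1)) M
            - (x - 1) * (2 * x + 1) * (\<Sum>j<M. pp (n - 1) (Suc j) * 2 ^ Suc j)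
            + (x - 1) ^ 2 * (\<Sum>j<M. gg (n - 1) (Suc j) * 2 ^ Suc j)"
    unfolding W_def by (simp add: sum.distrib sum_subtractf sum_distrib_left)
  also have "\<dots> = (2 * x + 1) * (x + 2) * 8 * W (pp n) M
            + (2 * x + 1) * (x + 2) * (W (pp n) (Suc M) - 1)
            - (x - 1) * (2 * x + 1) * 8 * W (pp (n - 1)) M
            - (x - 1) * (2 * x + 1) * (W (pp (n - 1)) (Suc M) - 1)
            + (x - 1) ^ 2 * (W (gg (n - 1)) (Suc M) - 1)"
    by (simp only: W_shift pp0 gg0)
  finally have *: "(x + 2) ^ 2 * Gs (n + 1) = (x + 2) ^ 2 + ((2 * x + 1) * (x + 2) * 8 * W (pp n) M
            + (2 * x + 1) * (x + 2) * (W (pp n) (Suc M) - 1)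
            - (x - 1) * (2 * x + 1) * 8 * W (pp (n - 1)) M
            - (x - 1) * (2 * x + 1) * (W (pp (n - 1)) (Suc M) - 1)
            + (x - 1) ^ 2 * (W (gg (n - 1)) (Suc M) - 1))" .
  have n1: "n - 1 \<ge> 1" "n \<ge> 1" using assms by simp_all
  have a1: "W (pp n) M = Ps n / 3" "W (pp n) (Suc M) = Ps n / 3"
    "W (pp (n - 1)) M = Ps (n - 1) / 3" "W (pp (n - 1)) (Suc M) = Ps (n - 1) / 3" "W (gg (n - 1)) (Suc M) = Gs (n - 1)"
  proof -
    have m: "M \<ge> n + 1" "Suc M \<ge> n + 1" "M \<ge> n - 1 + 1" "Suc M \<ge> n - 1 + 1" using assms by (simp_all add: M_def)
    show "W (pp n) M = Ps n / 3" using Ps_any[OF n1(2) m(1)] by simp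
    show "W (pp n) (Suc M) = Ps n / 3" using Ps_any[OF n1(2) m(2)] by simp
    show "W (pp (n - 1)) M = Ps (n - 1) / 3" using Ps_any[OF n1(1) m(3)] by simp
    show "W (pp (n - 1)) (Suc M) = Ps (n - 1) / 3" using Ps_any[OF n1(1) m(4)] by simp
    show "W (gg (n - 1)) (Suc M) = Gs (n - 1)" using Gs_any[OF n1(1) m(4)] by simp
  qed
  show ?thesis using * unfolding a1 x_def[symmetric] by (simp add: field_simps power2_eq_square; simp add: algebra_simps)
qed

lemma Sprod_all:
  assumes "n \<ge> 1"
  shows "schroeder_s n ^ 2 = Gs n \<and> schroeder_s n * schroeder_s (n + 1) = Ps n"
proof -
  let ?P = "\<lambda>n. schroeder_s n ^ 2 = Gs n \<and> schroeder_s n * schroeder_s (n + 1) = Ps n"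
  have "?P n \<and> ?P (Suc n)" using assms
  proof (induction n rule: nat_induct_at_least)
    case base
    have "Gs 1 = 1" "Ps 1 = 3" "Gs 2 = 9" "Ps 2 = 33"
      by (simp_all add: Gs_def Ps_def W_def gg_def pp_def hh01 numeral_eq_Suc)
    then show ?case using s123 by (simp add: numeral_eq_Suc)
  next
    case (Suc n)
    define a where "a = Suc n"
    have a2: "a \<ge> 2" using Suc.hyps by (simp add: a_def)
    define s1 where "s1 = schroeder_s (a + 1)"
    define s0 where "s0 = schroeder_s a"
    define sm where "sm = schroeder_s (a - 1)"
    define s2 where "s2 = schroeder_s (a + 2)"
    define x :: rat where "x = of_nat a"
    have x0: "x + 2 \<noteq> 0" "x + 3 \<noteq> 0" by (simp_all add: x_def add_nonneg_pos)
    have IH1: "sm ^ 2 = Gs (a - 1)" "sm * s0 = Ps (a - 1)" using Suc.IH by (simp_all add: a_def sm_def s0_def)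
    have IH2: "s0 ^ 2 = Gs a" "s0 * s1 = Ps a" using Suc.IH by (simp_all add: a_def s1_def s0_def)
    have rec: "(x + 2) * s1 = 3 * (2 * x + 1) * s0 - (x - 1) * sm"
      using S_rec[OF a2] by (simp add: x_def s1_def s0_def sm_def)
    have rec2: "(x + 3) * s2 = 3 * (2 * x + 3) * s1 - x * s0"
    proof -
      have "a + 1 \<ge> 2" using a2 by simp
      from S_rec[OF this] show ?thesis by (simp add: x_def s2_def s1_def s0_def algebra_simps)
    qed
    have g2: "(x + 2) ^ 2 * Gs (a + 1) = 3 * (2 * x + 1) * (x + 2) * Ps a
       - 3 * (x - 1) * (2 * x + 1) * Ps (a - 1) + (x - 1) ^ 2 * Gs (a - 1)"
      using SG2[OF a2] by (simp add: x_def)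
    have g1: "(x + 3) * Ps (a + 1) = 3 * (2 * x + 3) * Gs (a + 1) - x * Ps a"
    proof -
      have "a + 1 \<ge> 2" using a2 by simp
      from SG1[OF this] show ?thesis by (simp add: x_def algebra_simps)
    qed
    have G: "Gs (a + 1) = s1 ^ 2"
    proof -
      have "((x + 2) * s1) ^ 2 = ((x + 2) * s1) * (3 * (2 * x + 1) * s0 - (x - 1) * sm)"
        using rec by (simp add: power2_eq_square)
      also have "\<dots> = 3 * (2 * x + 1) * (x + 2) * (s0 * s1) - (x - 1) * sm * ((x + 2) * s1)"
        by (simp add: algebra_simps)
      also have "\<dots> = 3 * (2 * x + 1) * (x + 2) * (s0 * s1) - (x - 1) * sm * (3 * (2 * x + 1) * s0 - (x - 1) * sm)"
        using rec by simp
      also have "\<dots> = (x + 2) ^ 2 * Gs (a + 1)"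
        unfolding g2 IH1[symmetric] IH2[symmetric] by (simp add: algebra_simps power2_eq_square)
      finally have "(x + 2) ^ 2 * s1 ^ 2 = (x + 2) ^ 2 * Gs (a + 1)" by (simp only: power_mult_distrib)
      then show ?thesis using x0 by (metis mult_left_cancel power_not_zero)
    qed
    have P: "Ps (a + 1) = s1 * s2"
    proof -
      have "(x + 3) * Ps (a + 1) = (3 * (2 * x + 3) * s1 - x * s0) * s1"
        unfolding g1 G IH2[symmetric] by (simp add: algebra_simps power2_eq_square)
      also have "\<dots> = (x + 3) * (s1 * s2)" unfolding rec2[symmetric] by (simp add: algebra_simps)
      finally show ?thesis using x0 by simp
    qed
    show ?case using Suc.IH G P by (simp add: a_def s1_def s2_def)
  qed
  then show ?thesis by blast
qed


lemma cat_Int: "cat j \<in> \<int>" unfolding cat_int by simp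

lemma sum_cl1: "(\<Sum>k=1..n. of_nat k * ee k j) = cl1 n j"
proof (induction n)
  case 0 then show ?case by (simp add: cl1_def)
next
  case (Suc n)
  show ?case
  proof (cases "n = 0")
    case True
    then show ?thesis by (cases j) (simp_all add: cl1_def ee_def cat_def)
  next
    case False
    then have "n \<ge> 1" by simp
    from T78(1)[OF this, of j] show ?thesis using Suc.IH by (simp add: algebra_simps)
  qed
qed

lemma sum_cl2: "(\<Sum>k=1..n. of_nat k ^ 3 * ee k j) = cl2 n j"
proof (induction n)
  case 0 then show ?case by (simp add: cl2_def)
next
  case (Suc n)
  show ?case
  proof (cases "n = 0")
    case True
    then show ?thesis by (cases j) (simp_all add: cl2_def ee_def)
  next
    case False
    then have "n \<ge> 1" by simp
    from T78(2)[OF this, of j] show ?thesis using Suc.IH by (simp add: algebra_simps)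
  qed
qed

lemma sum_cl3: "(\<Sum>k=1..n. of_nat k * (of_nat k + 1) * (2 * of_nat k + 1) * gg k j) = cl3 n j"
proof (induction n)
  case 0 then show ?case by (simp add: cl3_def)
next
  case (Suc n)
  from T9[of n j] show ?case using Suc.IH by (simp add: algebra_simps)
qed

lemma helperS: "P = (\<Sum>j<N. f j) \<Longrightarrow> (c::rat) * P = (\<Sum>j<N. c * f j)"
  by (simp add: sum_distrib_left)

lemma part1_eq:
  "(\<Sum>k=1..n. of_nat k * of_nat (delannoy k) * of_nat (delannoy (k - 1)))
     = 3 * (\<Sum>j<n + 1. cl1 n j * 2 ^ j)"
proof -
  define N where "N = n + 1"
  have "(\<Sum>k=1..n. of_nat k * of_nat (delannoy k) * of_nat (delannoy (k - 1)) :: rat)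
      = (\<Sum>k=1..n. 3 * (\<Sum>j<N. of_nat k * ee k j * 2 ^ j))"
  proof (rule sum.cong)
    fix k assume k: "k \<in> {1..n}"
    then have k1: "k \<ge> 1" and kn: "N \<ge> k + 1" by (auto simp: N_def)
    have "of_nat (delannoy k) * of_nat (delannoy (k - 1)) = Es k" using Dprod_all[of k] k1 by simp
    also have "\<dots> = 3 * W (ee k) N" using Es_any[OF k1 kn] by simp
    finally have "of_nat (delannoy k) * of_nat (delannoy (k - 1)) = (\<Sum>j<N. 3 * (ee k j * 2 ^ j))"
      unfolding W_def by (simp add: sum_distrib_left)
    from helperS[OF this, of "of_nat k"]
    show "of_nat k * of_nat (delannoy k) * of_nat (delannoy (k - 1)) = 3 * (\<Sum>j<N. of_nat k * ee k j * 2 ^ j)"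
      by (simp add: sum_distrib_left mult_ac)
  qed simp
  also have "\<dots> = 3 * (\<Sum>k=1..n. \<Sum>j<N. of_nat k * ee k j * 2 ^ j)"
    by (simp add: sum_distrib_left)
  also have "\<dots> = 3 * (\<Sum>j<N. \<Sum>k=1..n. of_nat k * ee k j * 2 ^ j)"
    by (rule arg_cong[where f = "\<lambda>t. 3 * t"], rule sum.swap)
  also have "\<dots> = 3 * (\<Sum>j<N. cl1 n j * 2 ^ j)"
    by (rule arg_cong[where f = "\<lambda>t. 3 * t"], rule sum.cong[OF refl], simp add: sum_distrib_right[symmetric] sum_cl1[simplified])
  finally show ?thesis unfolding N_def .
qed

lemma part2_eq:
  "(\<Sum>k=1..n. of_nat k ^ 3 * of_nat (delannoy k) * of_nat (delannoy (k - 1)))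
     = 3 * (\<Sum>j<n + 1. cl2 n j * 2 ^ j)"
proof -
  define N where "N = n + 1"
  have "(\<Sum>k=1..n. of_nat k ^ 3 * of_nat (delannoy k) * of_nat (delannoy (k - 1)) :: rat)
      = (\<Sum>k=1..n. 3 * (\<Sum>j<N. of_nat k ^ 3 * ee k j * 2 ^ j))"
  proof (rule sum.cong)
    fix k assume k: "k \<in> {1..n}"
    then have k1: "k \<ge> 1" and kn: "N \<ge> k + 1" by (auto simp: N_def)
    have "of_nat (delannoy k) * of_nat (delannoy (k - 1)) = Es k" using Dprod_all[of k] k1 by simp
    also have "\<dots> = 3 * W (ee k) N" using Es_any[OF k1 kn] by simp
    finally have "of_nat (delannoy k) * of_nat (delannoy (k - 1)) = (\<Sum>j<N. 3 * (ee k j * 2 ^ j))"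
      unfolding W_def by (simp add: sum_distrib_left)
    from helperS[OF this, of "of_nat k ^ 3"]
    show "of_nat k ^ 3 * of_nat (delannoy k) * of_nat (delannoy (k - 1)) = 3 * (\<Sum>j<N. of_nat k ^ 3 * ee k j * 2 ^ j)"
      by (simp add: sum_distrib_left mult_ac)
  qed simp
  also have "\<dots> = 3 * (\<Sum>k=1..n. \<Sum>j<N. of_nat k ^ 3 * ee k j * 2 ^ j)"
    by (simp add: sum_distrib_left)
  also have "\<dots> = 3 * (\<Sum>j<N. \<Sum>k=1..n. of_nat k ^ 3 * ee k j * 2 ^ j)"
    by (rule arg_cong[where f = "\<lambda>t. 3 * t"], rule sum.swap)
  also have "\<dots> = 3 * (\<Sum>j<N. cl2 n j * 2 ^ j)"
    by (rule arg_cong[where f = "\<lambda>t. 3 * t"], rule sum.cong[OF refl], simp add: sum_distrib_right[symmetric] sum_cl2[simplified])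
  finally show ?thesis unfolding N_def .
qed

lemma part3_eq:
  "(\<Sum>k=1..n. of_nat k * (of_nat k + 1) * (2 * of_nat k + 1) * schroeder_s k ^ 2)
     = (\<Sum>j<n + 1. cl3 n j * 2 ^ j)"
proof -
  define N where "N = n + 1"
  have "(\<Sum>k=1..n. of_nat k * (of_nat k + 1) * (2 * of_nat k + 1) * schroeder_s k ^ 2)
      = (\<Sum>k=1..n. (\<Sum>j<N. of_nat k * (of_nat k + 1) * (2 * of_nat k + 1) * gg k j * 2 ^ j))"
  proof (rule sum.cong)
    fix k assume k: "k \<in> {1..n}"
    then have k1: "k \<ge> 1" and kn: "N \<ge> k + 1" by (auto simp: N_def)
    have "schroeder_s k ^ 2 = Gs k" using Sprod_all[OF k1] by simp
    also have "\<dots> = W (gg k) N" using Gs_any[OF k1 kn] by simp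
    finally have "schroeder_s k ^ 2 = (\<Sum>j<N. gg k j * 2 ^ j)"
      unfolding W_def .
    from helperS[OF this, of "of_nat k * (of_nat k + 1) * (2 * of_nat k + 1)"]
    show "of_nat k * (of_nat k + 1) * (2 * of_nat k + 1) * schroeder_s k ^ 2
       = (\<Sum>j<N. of_nat k * (of_nat k + 1) * (2 * of_nat k + 1) * gg k j * 2 ^ j)"
      by (simp add: mult_ac)
  qed simp
  also have "\<dots> = (\<Sum>j<N. \<Sum>k=1..n. of_nat k * (of_nat k + 1) * (2 * of_nat k + 1) * gg k j * 2 ^ j)"
    by (rule sum.swap)
  also have "\<dots> = (\<Sum>j<N. cl3 n j * 2 ^ j)"
    by (rule sum.cong[OF refl], simp add: sum_distrib_right[symmetric] sum_cl3[simplified])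
  finally show ?thesis unfolding N_def .
qed

lemma part4_eq:
  assumes "n \<ge> 1"
  shows "(\<Sum>k=1..n. of_nat k * (of_nat k + 1) * (2 * of_nat k + 1) * (-1) ^ (n - k) * schroeder_s k ^ 2)
     = of_nat n * (of_nat n + 1) * (of_nat n + 2) * (schroeder_s n * schroeder_s (n + 1)) / 3"
  using assms
proof (induction n rule: nat_induct_at_least)
  case base
  have "schroeder_s (Suc 0) = 1" "schroeder_s (Suc (Suc 0)) = 3" using s123 by (simp_all add: numeral_2_eq_2)
  then show ?case by simp
next
  case (Suc n)
  define w where "w = (\<lambda>k. of_nat k * (of_nat k + 1) * (2 * of_nat k + 1) * schroeder_s k ^ 2 :: rat)"
  have "(\<Sum>k=1..Suc n. of_nat k * (of_nat k + 1) * (2 * of_nat k + 1) * (-1) ^ (Suc n - k) * schroeder_s k ^ 2)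
     = (\<Sum>k=1..n. - (of_nat k * (of_nat k + 1) * (2 * of_nat k + 1) * (-1) ^ (n - k) * schroeder_s k ^ 2)) + w (Suc n)"
  proof -
    have "(\<Sum>k=1..n. of_nat k * (of_nat k + 1) * (2 * of_nat k + 1) * (-1) ^ (Suc n - k) * schroeder_s k ^ 2)
       = (\<Sum>k=1..n. - (of_nat k * (of_nat k + 1) * (2 * of_nat k + 1) * (-1) ^ (n - k) * schroeder_s k ^ 2))"
      by (rule sum.cong) (auto simp: Suc_diff_le)
    then show ?thesis by (simp add: w_def)
  qed
  also have "\<dots> = - (of_nat n * (of_nat n + 1) * (of_nat n + 2) * (schroeder_s n * schroeder_s (n + 1)) / 3) + w (Suc n)"
    using Suc.IH by (simp add: sum_negf)
  also have "\<dots> = of_nat (Suc n) * (of_nat (Suc n) + 1) * (of_nat (Suc n) + 2) * (schroeder_s (Suc n) * schroeder_s (Suc n + 1)) / 3"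
  proof -
    have "n + 1 \<ge> 2" using Suc.hyps by simp
    from S_rec[OF this] have r: "(of_nat n + 3) * schroeder_s (n + 2) = 3 * (2 * of_nat n + 3) * schroeder_s (n + 1) - of_nat n * schroeder_s n"
      by (simp add: algebra_simps)
    have "of_nat (Suc n) * (of_nat (Suc n) + 1) * (of_nat (Suc n) + 2) * (schroeder_s (Suc n) * schroeder_s (Suc n + 1))
       = (of_nat n + 1) * (of_nat n + 2) * schroeder_s (n + 1) * ((of_nat n + 3) * schroeder_s (n + 2))"
      by (simp add: algebra_simps)
    also have "\<dots> = (of_nat n + 1) * (of_nat n + 2) * schroeder_s (n + 1) * (3 * (2 * of_nat n + 3) * schroeder_s (n + 1) - of_nat n * schroeder_s n)"
      unfolding r ..
    finally have key: "of_nat (Suc n) * (of_nat (Suc n) + 1) * (of_nat (Suc n) + 2) * (schroeder_s (Suc n) * schroeder_s (Suc n + 1))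
      = (of_nat n + 1) * (of_nat n + 2) * schroeder_s (n + 1) * (3 * (2 * of_nat n + 3) * schroeder_s (n + 1) - of_nat n * schroeder_s n)" .
    show ?thesis unfolding key unfolding w_def by (simp add: algebra_simps power2_eq_square)
  qed
  finally show ?case .
qed

lemma pp_Int: "2 ^ j * pp n j \<in> \<int>"
proof (cases "n = 0")
  case True then show ?thesis by (cases j) (simp_all add: pp_def hh01)
next
  case False
  then have n1: "n \<ge> 1" by simp
  show ?thesis
  proof (cases j)
    case 0 then show ?thesis by (simp add: pp0)
  next
    case (Suc i)
    have "2 * pp n j = (of_nat n + 2) * pp n j - of_nat n * pp n j" by (simp add: algebra_simps)
    also have "\<dots> = of_nat (n - 1 choose j) * of_nat (n + j + 2 choose (j + 1)) * cat (j + 1)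
       - of_nat (n choose (j + 1)) * of_nat (n + j + 2 choose j) * cat (j + 1)"
      unfolding T10[OF n1] ..
    finally have "2 * pp n j \<in> \<int>" using cat_Int by simp
    then have "2 ^ i * (2 * pp n j) \<in> \<int>" by simp
    then show ?thesis by (simp add: Suc mult_ac)
  qed
qed


theorem corollary1p1:
  fixes n :: nat
  assumes "n \<ge> 1"
  shows "((\<Sum>k=1..n. of_nat k * of_nat (delannoy k) * of_nat (delannoy (k - 1)))
           / (3 * (of_nat n * (of_nat n + 1) / 2)) \<in> (\<int> :: rat set)) \<and>
        ((\<Sum>k=1..n. of_nat k ^ 3 * of_nat (delannoy k) * of_nat (delannoy (k - 1)))
           / (of_nat n ^ 2 * (of_nat n + 1) ^ 2 / 4) \<in> (\<int> :: rat set)) \<and>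
        ((\<Sum>k=1..n. of_nat k * (of_nat k + 1) * (2 * of_nat k + 1) * schroeder_s k ^ 2)
           / (of_nat n * (of_nat n + 1) * (of_nat n + 2) / of_nat (gcd 2 n)) \<in> (\<int> :: rat set)) \<and>
        ((1 / (of_nat n * (of_nat n + 1) * (of_nat n + 2))) *
           (\<Sum>k=1..n. of_nat k * (of_nat k + 1) * (2 * of_nat k + 1) * (-1) ^ (n - k) * schroeder_s k ^ 2)
         = schroeder_s n * schroeder_s (n + 1) / 3) \<and>
        (schroeder_s n * schroeder_s (n + 1) / 3 \<in> (\<int> :: rat set))"
proof -
  define x :: rat where "x = of_nat n"
  have x0: "x \<noteq> 0" "x + 1 \<noteq> 0" "x + 2 \<noteq> 0" using assms by (simp_all add: x_def add_nonneg_pos)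
  have g1: "(\<Sum>j<N. cl1 n j * 2 ^ j) = (x * (x + 1) / 2) *
      (\<Sum>j<N. of_nat (n - 1 choose j) * of_nat (n + j + 1 choose j) * cat j * 2 ^ j)" for N
    unfolding sum_distrib_left by (rule sum.cong) (simp_all add: cl1_def x_def mult_ac)
  have P1: "(\<Sum>k=1..n. of_nat k * of_nat (delannoy k) * of_nat (delannoy (k - 1)))
           / (3 * (of_nat n * (of_nat n + 1) / 2)) \<in> (\<int> :: rat set)"
  proof -
    define SS :: rat where "SS = (\<Sum>j<n + 1. of_nat (n - 1 choose j) * of_nat (n + j + 1 choose j) * cat j * 2 ^ j)"
    have nz: "3 * (x * (x + 1) / 2) \<noteq> 0" using x0 by simp
    have "(\<Sum>k=1..n. of_nat k * of_nat (delannoy k) * of_nat (delannoy (k - 1)))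
           / (3 * (of_nat n * (of_nat n + 1) / 2)) = (3 * (x * (x + 1) / 2)) * SS / (3 * (x * (x + 1) / 2))"
      unfolding part1_eq g1 x_def[symmetric] SS_def[symmetric] by (simp add: mult_ac)
    also have "\<dots> = (\<Sum>j<n + 1. of_nat (n - 1 choose j) * of_nat (n + j + 1 choose j) * cat j * 2 ^ j)"
      using nz unfolding SS_def by simp
    also have "\<dots> \<in> \<int>" using cat_Int by (intro Ints_sum Ints_mult Ints_power) auto
    finally show ?thesis .
  qed
  have g2: "3 * (\<Sum>j<N. cl2 n j * 2 ^ j) = (x ^ 2 * (x + 1) ^ 2 / 4) *
      (\<Sum>j<N. of_nat (n - 1 choose j) * of_nat (n + j + 1 choose j) * (6 * of_nat (2 * j choose j) / (of_nat j + 2)) * 2 ^ j)" for N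
    unfolding sum_distrib_left
  proof (rule sum.cong)
    fix j
    have "(of_nat j + 2 :: rat) \<noteq> 0" by (simp add: add_nonneg_pos)
    then show "3 * (cl2 n j * 2 ^ j) = x ^ 2 * (x + 1) ^ 2 / 4 *
       (of_nat (n - 1 choose j) * of_nat (n + j + 1 choose j) * (6 * of_nat (2 * j choose j) / (of_nat j + 2)) * 2 ^ j)"
      by (simp add: cl2_def x_def field_simps)
  qed simp
  have P2: "(\<Sum>k=1..n. of_nat k ^ 3 * of_nat (delannoy k) * of_nat (delannoy (k - 1)))
           / (of_nat n ^ 2 * (of_nat n + 1) ^ 2 / 4) \<in> (\<int> :: rat set)"
  proof -
    define SS :: rat where "SS = (\<Sum>j<n + 1. of_nat (n - 1 choose j) * of_nat (n + j + 1 choose j) * (6 * of_nat (2 * j choose j) / (of_nat j + 2)) * 2 ^ j)"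
    have nz: "x ^ 2 * (x + 1) ^ 2 / 4 \<noteq> 0" using x0 by simp
    have "(\<Sum>k=1..n. of_nat k ^ 3 * of_nat (delannoy k) * of_nat (delannoy (k - 1)))
           / (of_nat n ^ 2 * (of_nat n + 1) ^ 2 / 4) = (x ^ 2 * (x + 1) ^ 2 / 4) * SS / (x ^ 2 * (x + 1) ^ 2 / 4)"
      unfolding part2_eq g2 x_def[symmetric] SS_def[symmetric] by (simp add: mult_ac)
    also have "\<dots> = (\<Sum>j<n + 1. of_nat (n - 1 choose j) * of_nat (n + j + 1 choose j) * (6 * of_nat (2 * j choose j) / (of_nat j + 2)) * 2 ^ j)"
      using nz unfolding SS_def by simp
    also have "\<dots> = (\<Sum>j<n + 1. of_nat (n - 1 choose j) * of_nat (n + j + 1 choose j)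
        * (4 * of_nat (2 * j choose j) - (of_nat j + 1) * cat (j + 1)) * 2 ^ j)"
      unfolding six_const ..
    also have "\<dots> \<in> \<int>" using cat_Int by (intro Ints_sum Ints_mult Ints_power Ints_diff) auto
    finally show ?thesis .
  qed
  define A where "A = (\<Sum>j<n + 1. cat (j + 1) * of_nat (n + 1 choose (j + 2)) * of_nat (n + j + 2 choose j) * 2 ^ j)"
  define B where "B = (\<Sum>j<n + 1. cat (j + 1) * of_nat (n - 1 choose j) * of_nat (n + j + 2 choose (j + 2)) * 2 ^ j)"
  have AI: "A \<in> \<int>" unfolding A_def using cat_Int by (intro Ints_sum Ints_mult Ints_power) auto
  have BI: "B \<in> \<int>" unfolding B_def using cat_Int by (intro Ints_sum Ints_mult Ints_power) auto
  have gA: "(\<Sum>j<N. cl3 n j * 2 ^ j) = (x + 1) * (x + 2) *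
      (\<Sum>j<N. cat (j + 1) * of_nat (n + 1 choose (j + 2)) * of_nat (n + j + 2 choose j) * 2 ^ j)" for N
    unfolding sum_distrib_left by (rule sum.cong) (simp_all add: cl3_def x_def mult_ac)
  have gB: "(\<Sum>j<N. cl3 n j * 2 ^ j) = x * (x + 1) *
      (\<Sum>j<N. cat (j + 1) * of_nat (n - 1 choose j) * of_nat (n + j + 2 choose (j + 2)) * 2 ^ j)" for N
    unfolding sum_distrib_left
  proof (rule sum.cong)
    fix j
    have "(of_nat n + 1) * (of_nat n + 2) * of_nat (n + 1 choose (j + 2)) * of_nat (n + j + 2 choose j)
       = of_nat n * (of_nat n + 1) * of_nat (n - 1 choose j) * (of_nat (n + j + 2 choose (j + 2)) :: rat)"
      by (rule T9'[OF assms])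
    then show "cl3 n j * 2 ^ j = x * (x + 1) * (cat (j + 1) * of_nat (n - 1 choose j) * of_nat (n + j + 2 choose (j + 2)) * 2 ^ j)"
      unfolding cl3_def x_def by (simp add: mult_ac)
  qed simp
  have L3A: "(\<Sum>k=1..n. of_nat k * (of_nat k + 1) * (2 * of_nat k + 1) * schroeder_s k ^ 2) = (x + 1) * (x + 2) * A"
    unfolding part3_eq gA A_def ..
  have L3B: "(\<Sum>k=1..n. of_nat k * (of_nat k + 1) * (2 * of_nat k + 1) * schroeder_s k ^ 2) = x * (x + 1) * B"
    unfolding part3_eq gB B_def ..
  have AB: "(x + 2) * A = x * B" using L3A L3B x0 by (metis mult.assoc mult.commute mult_left_cancel)
  have P3: "(\<Sum>k=1..n. of_nat k * (of_nat k + 1) * (2 * of_nat k + 1) * schroeder_s k ^ 2)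
           / (of_nat n * (of_nat n + 1) * (of_nat n + 2) / of_nat (gcd 2 n)) \<in> (\<int> :: rat set)"
  proof (cases "even n")
    case True
    then have g: "gcd 2 n = 2" by simp
    have "(\<Sum>k=1..n. of_nat k * (of_nat k + 1) * (2 * of_nat k + 1) * schroeder_s k ^ 2)
           / (of_nat n * (of_nat n + 1) * (of_nat n + 2) / of_nat (gcd 2 n)) = B - A"
    proof -
      have h: "2 * A = x * (B - A)" using AB by (simp add: algebra_simps)
      define a where "a = (x + 1) * (x + 2)"
      have a0: "a \<noteq> 0" using x0 by (simp add: a_def)
      have "(x + 1) * (x + 2) * A / (x * (x + 1) * (x + 2) / of_nat 2) = a * A / (a * x / 2)"
        by (simp add: a_def mult_ac)
      also have "\<dots> = (2 * A) / x" using a0 by (simp add: field_simps)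
      also have "\<dots> = B - A" unfolding h using x0 by simp
      finally show ?thesis unfolding L3A g x_def[symmetric] .
    qed
    then show ?thesis using AI BI by simp
  next
    case False
    then obtain m where m: "n = 2 * m + 1" using oddE by blast
    have g: "gcd 2 n = 1" using False by (simp add: coprime_iff_gcd_eq_1[symmetric])
    have xm: "x = 2 * of_nat m + 1" by (simp add: x_def m)
    have "(\<Sum>k=1..n. of_nat k * (of_nat k + 1) * (2 * of_nat k + 1) * schroeder_s k ^ 2)
           / (of_nat n * (of_nat n + 1) * (of_nat n + 2) / of_nat (gcd 2 n)) = (of_nat m + 1) * A - of_nat m * B"
    proof -
      have "x * ((of_nat m + 1) * A - of_nat m * B) = A"
      proof -
        have "x * ((of_nat m + 1) * A - of_nat m * B) = x * (of_nat m + 1) * A - of_nat m * (x * B)"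
          by (simp add: algebra_simps)
        also have "\<dots> = x * (of_nat m + 1) * A - of_nat m * ((x + 2) * A)" unfolding AB ..
        also have "\<dots> = A" unfolding xm by (simp add: algebra_simps)
        finally show ?thesis .
      qed
      then have h: "A / x = (of_nat m + 1) * A - of_nat m * B" using x0 by (simp add: field_simps)
      define a where "a = (x + 1) * (x + 2)"
      have a0: "a \<noteq> 0" using x0 by (simp add: a_def)
      have "(x + 1) * (x + 2) * A / (x * (x + 1) * (x + 2) / of_nat 1) = a * A / (a * x)"
        by (simp add: a_def mult_ac)
      also have "\<dots> = A / x" using a0 by simp
      finally show ?thesis unfolding L3A g x_def[symmetric] h .
    qed
    then show ?thesis using AI BI by simp
  qed
  have P4: "(1 / (of_nat n * (of_nat n + 1) * (of_nat n + 2))) *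
           (\<Sum>k=1..n. of_nat k * (of_nat k + 1) * (2 * of_nat k + 1) * (-1) ^ (n - k) * schroeder_s k ^ 2)
         = schroeder_s n * schroeder_s (n + 1) / 3"
  proof -
    define a where "a = x * (x + 1) * (x + 2)"
    have a0: "a \<noteq> 0" using x0 by (simp add: a_def)
    have "1 / a * (a * (schroeder_s n * schroeder_s (n + 1)) / 3) = schroeder_s n * schroeder_s (n + 1) / 3"
      using a0 by simp
    then show ?thesis unfolding part4_eq[OF assms] x_def[symmetric] a_def by (simp only: mult.assoc)
  qed
  have P5: "schroeder_s n * schroeder_s (n + 1) / 3 \<in> (\<int> :: rat set)"
  proof -
    have "schroeder_s n * schroeder_s (n + 1) / 3 = Ps n / 3" using Sprod_all[OF assms] by simp
    also have "\<dots> = (\<Sum>j<n + 1. 2 ^ j * pp n j)" by (simp add: Ps_def W_def mult_ac)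
    also have "\<dots> \<in> \<int>" using pp_Int by (intro Ints_sum) auto
    finally show ?thesis .
  qed
  show ?thesis using P1 P2 P3 P4 P5 by blast
qed

end
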